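(* For $g\ge1$, the exact sequence \[1\to\mathcal{M}_{0,1}^{2g}\to\mathcal{M}_{0,\mathrm{half}}^{2g}\to\mathbb{Z}/2\mathbb{Z}\to1\] splits. Here the second map sends $[T]$ to $T|_{\partial D^2}\in\langle s\rangle\cong\mathbb{Z}/2\mathbb{Z}$.
   Context: Let $p_1,\dots,p_{2g}$ be distinct points in the interior of $D^2$, and let $s:\partial D^2\to\partial D^2$ be the half rotation. $\mathcal{M}_{0,\mathrm{half}}^{2g}$ is the group of path components of $\{T\in\mathrm{Diff}_+(D^2): T(\{p_1,\dots,p_{2g}\})=\{p_1,\dots,p_{2g}\},\ T|_{\partial D^2}\in\{s,\mathrm{id}_{\partial D^2}\}\}$. $\mathcal{M}_{0,1}^{2g}$ is the mapping class group of $D^2$ relative to the boundary (pointwise) and the set $\{p_1,\dots,p_{2g}\}$; it is the kernel of the restriction-to-boundary map. *)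

theory Defs
  imports "HOL-Analysis.Analysis" "HOL-Algebra.Elementary_Groups"
begin

definition disk :: "complex set" where "disk = cball 0 1"
definition circle :: "complex set" where "circle = sphere 0 1"
definition half_rot :: "complex \<Rightarrow> complex" where "half_rot z = - z"

text \<open>Directional (partial) derivative of f in direction v, taken within the
  closed disk (so it is meaningful up to the boundary); iterated partials.\<close>

definition dpart :: "complex \<Rightarrow> (complex \<Rightarrow> complex) \<Rightarrow> complex \<Rightarrow> complex" where
  "dpart v f = (\<lambda>x. frechet_derivative f (at x within disk) v)"

definition dparts :: "complex list \<Rightarrow> (complex \<Rightarrow> complex) \<Rightarrow> complex \<Rightarrow> complex" where
  "dparts vs f = foldr dpart vs f"

text \<open>C^infinity on the closed disk: all iterated partial derivatives (in the
  coordinate directions 1 and i) exist up to the boundary.\<close>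

definition smooth_disk :: "(complex \<Rightarrow> complex) \<Rightarrow> bool" where
  "smooth_disk f \<longleftrightarrow>
     (\<forall>vs\<in>lists {1, \<i>}. \<forall>x\<in>disk. dparts vs f differentiable (at x within disk))"

text \<open>Jacobian determinant of f at x (real 2x2 determinant).\<close>

definition jac_det :: "(complex \<Rightarrow> complex) \<Rightarrow> complex \<Rightarrow> real" where
  "jac_det f x = Im (cnj (dpart 1 f x) * dpart \<i> f x)"

text \<open>Orientation-preserving diffeomorphisms of D^2 (functions are only
  relevant on the disk).\<close>

definition Diff_plus :: "(complex \<Rightarrow> complex) set" where
  "Diff_plus = {T. T ` disk = disk \<and> inj_on T disk \<and> smooth_disk T
                  \<and> smooth_disk (inv_into disk T) \<and> (\<forall>x\<in>disk. jac_det T x > 0)}"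

text \<open>The set whose path components form M_{0,half}^{2g}.\<close>

definition half_set :: "complex set \<Rightarrow> (complex \<Rightarrow> complex) set" where
  "half_set P = {T \<in> Diff_plus. T ` P = P \<and>
      ((\<forall>x\<in>circle. T x = half_rot x) \<or> (\<forall>x\<in>circle. T x = x))}"

text \<open>Continuous paths in the C^infinity topology: all iterated partial
  derivatives depend jointly continuously on (t,x).\<close>

definition smooth_path_in :: "(complex \<Rightarrow> complex) set \<Rightarrow> (real \<Rightarrow> complex \<Rightarrow> complex) \<Rightarrow> bool" where
  "smooth_path_in S H \<longleftrightarrow> (\<forall>t\<in>{0..1}. H t \<in> S) \<and>
     (\<forall>vs\<in>lists {1, \<i>}. continuous_on ({0..1} \<times> disk) (\<lambda>(t,x). dparts vs (H t) x))"

text \<open>Same path component in S (maps are compared on the disk only).\<close>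

definition pc_rel :: "(complex \<Rightarrow> complex) set \<Rightarrow> ((complex \<Rightarrow> complex) \<times> (complex \<Rightarrow> complex)) set" where
  "pc_rel S = {(T, T'). T \<in> S \<and> T' \<in> S \<and>
     (\<exists>H. smooth_path_in S H \<and> (\<forall>x\<in>disk. H 0 x = T x) \<and> (\<forall>x\<in>disk. H 1 x = T' x))}"

definition MCG_half :: "complex set \<Rightarrow> (complex \<Rightarrow> complex) set monoid" where
  "MCG_half P = \<lparr> carrier = half_set P // pc_rel (half_set P),
      monoid.mult = (\<lambda>A B. pc_rel (half_set P) `` {(SOME a. a \<in> A) \<circ> (SOME b. b \<in> B)}),
      one = pc_rel (half_set P) `` {id} \<rparr>"

text \<open>The map [T] \<mapsto> T restricted to the boundary, in <s> = Z/2Z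
  (1 = half rotation, 0 = identity).\<close>

definition bdry_class :: "(complex \<Rightarrow> complex) set \<Rightarrow> int" where
  "bdry_class A = (if (\<forall>x\<in>circle. (SOME T. T \<in> A) x = half_rot x) then 1 else 0)"

end

theory Submission
  imports Defs "HOL-Complex_Analysis.Complex_Analysis"
begin


lemma convex_disk: "convex disk" by (simp add: disk_def)
lemma compact_disk: "compact disk" by (simp add: disk_def)
lemma closed_disk: "closed disk" by (simp add: disk_def)

lemma deriv_unique_disk:
  assumes x: "x \<in> disk" and D1: "(f has_derivative D1) (at x within disk)"
    and D2: "(f has_derivative D2) (at x within disk)"
  shows "D1 = D2"
proof -
  have l1: "linear D1" "linear D2" using D1 D2 has_derivative_linear by blast+
  have seg: "D1 (y - x) = D2 (y - x)" if y: "y \<in> disk" for y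
  proof -
    define g where "g = (\<lambda>s::real. x + s *\<^sub>R (y - x))"
    have g: "(g has_derivative (\<lambda>s. s *\<^sub>R (y - x))) (at 0 within {0..1})"
      unfolding g_def by (auto intro!: derivative_eq_intros)
    have sub: "g ` {0..1} \<subseteq> disk"
    proof
      fix z assume "z \<in> g ` {0..1}"
      then obtain s where s: "s \<in> {0..1}" "z = g s" by auto
      have "z = (1 - s) *\<^sub>R x + s *\<^sub>R y" using s by (simp add: g_def algebra_simps)
      then show "z \<in> disk" using convex_disk x y s unfolding convex_def by auto
    qed
    have g0: "g 0 = x" by (simp add: g_def)
    have v: "((f \<circ> g) has_vector_derivative (D (y - x))) (at 0 within cbox 0 1)"
      if D: "(f has_derivative D) (at x within disk)" for D
    proof -
      have lD: "linear D" using D has_derivative_linear by blast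
      have "((f \<circ> g) has_derivative (D \<circ> (\<lambda>s. s *\<^sub>R (y - x)))) (at 0 within {0..1})"
        by (rule diff_chain_within[OF g]) (use has_derivative_subset[OF D sub] g0 in simp)
      moreover have "(D \<circ> (\<lambda>s. s *\<^sub>R (y - x))) = (\<lambda>s. s *\<^sub>R D (y - x))"
        using lD by (auto simp: linear_scale)
      ultimately show ?thesis by (simp add: has_vector_derivative_def)
    qed
    show ?thesis
      using vector_derivative_unique_within_closed_interval[of 0 1 0 "f \<circ> g" "D1 (y-x)" "D2 (y-x)"] v[OF D1] v[OF D2]
      by simp
  qed
  have z: "0 \<in> disk" by (simp add: disk_def)
  show ?thesis
  proof
    fix h :: complex
    define k where "k = 1 / (1 + norm h)"
    have kpos: "k > 0" by (simp add: k_def add_pos_nonneg)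
    have "norm (k *\<^sub>R h) \<le> 1" unfolding k_def by (auto simp: divide_le_eq_1 add_pos_nonneg)
    then have kh: "k *\<^sub>R h \<in> disk" by (simp add: disk_def)
    have a: "D1 (0 - x) = D2 (0 - x)" using seg[OF z] .
    have b: "D1 (k *\<^sub>R h - x) = D2 (k *\<^sub>R h - x)" using seg[OF kh] .
    have "D1 (k *\<^sub>R h) = D2 (k *\<^sub>R h)"
      using a b l1 by (simp add: linear_diff linear_neg)
    then have "k *\<^sub>R D1 h = k *\<^sub>R D2 h" using l1 by (simp add: linear_scale)
    then show "D1 h = D2 h" using kpos by simp
  qed
qed



lemma fd_eq:
  assumes "x \<in> disk" "(f has_derivative D) (at x within disk)"
  shows "frechet_derivative f (at x within disk) = D"
  using deriv_unique_disk assms frechet_derivative_works differentiableI by metis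

lemma dpart_eq:
  "x \<in> disk \<Longrightarrow> (f has_derivative D) (at x within disk) \<Longrightarrow> dpart v f x = D v"
  by (simp add: dpart_def fd_eq)

lemma hd_cong:
  assumes "(f has_derivative D) (at x within disk)" "x \<in> disk" "\<forall>y\<in>disk. f y = g y"
  shows "(g has_derivative D) (at x within disk)"
  by (rule has_derivative_transform_within[of f D x disk 1]) (use assms in auto)

lemma dpart_cong:
  assumes "\<forall>y\<in>disk. f y = g y" "x \<in> disk"
  shows "dpart v f x = dpart v g x"
proof -
  have "\<And>D. (f has_derivative D) (at x within disk) = (g has_derivative D) (at x within disk)"
    using hd_cong assms by (metis)
  then show ?thesis unfolding dpart_def frechet_derivative_def by simp
qed

lemma diff_cong:
  assumes "f differentiable (at x within disk)" "x \<in> disk" "\<forall>y\<in>disk. f y = g y"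
  shows "g differentiable (at x within disk)"
  using assms hd_cong unfolding differentiable_def by blast

lemma dparts_Cons: "dparts (v # vs) f = dpart v (dparts vs f)"
  by (simp add: dparts_def)

lemma dparts_Nil[simp]: "dparts [] f = f"
  by (simp add: dparts_def)

lemma dparts_append: "dparts (vs @ [v]) f = dparts vs (dpart v f)"
  by (simp add: dparts_def)

lemma dparts_cong:
  assumes "\<forall>y\<in>disk. f y = g y"
  shows "\<forall>x\<in>disk. dparts vs f x = dparts vs g x"
proof (induction vs)
  case Nil then show ?case using assms by simp
next
  case (Cons v vs)
  then show ?case by (simp add: dparts_Cons dpart_cong)
qed

lemma dpart_lin:
  assumes "f differentiable (at x within disk)" "x \<in> disk"
  shows "dpart v f x = of_real (Re v) * dpart 1 f x + of_real (Im v) * dpart \<i> f x"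
proof -
  define D where "D = frechet_derivative f (at x within disk)"
  have "(f has_derivative D) (at x within disk)"
    using assms frechet_derivative_works D_def by blast
  then have l: "linear D" using has_derivative_linear by blast
  have v: "v = Re v *\<^sub>R 1 + Im v *\<^sub>R \<i>"
    by (simp add: complex_eq_iff)
  have "D v = Re v *\<^sub>R D 1 + Im v *\<^sub>R D \<i>"
    by (subst v) (simp add: l linear_add linear_scale)
  then show ?thesis unfolding dpart_def D_def by (simp add: scaleR_conv_of_real)
qed

lemma dpart_comp:
  assumes x: "x \<in> disk" and sub: "g ` disk \<subseteq> disk"
    and f: "f differentiable (at (g x) within disk)" and g: "g differentiable (at x within disk)"
  shows "dpart v (\<lambda>y. f (g y)) x =
     of_real (Re (dpart v g x)) * dpart 1 f (g x) + of_real (Im (dpart v g x)) * dpart \<i> f (g x)"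
proof -
  define Df where "Df = frechet_derivative f (at (g x) within disk)"
  define Dg where "Dg = frechet_derivative g (at x within disk)"
  have hf: "(f has_derivative Df) (at (g x) within disk)"
    using f frechet_derivative_works Df_def by blast
  have hg: "(g has_derivative Dg) (at x within disk)"
    using g frechet_derivative_works Dg_def by blast
  have "((f \<circ> g) has_derivative (Df \<circ> Dg)) (at x within disk)"
    by (rule diff_chain_within[OF hg]) (use has_derivative_subset[OF hf sub] in simp)
  then have "dpart v (\<lambda>y. f (g y)) x = Df (Dg v)"
    using dpart_eq[OF x] by (simp add: o_def)
  also have "\<dots> = dpart (Dg v) f (g x)" by (simp add: dpart_def Df_def)
  also have "\<dots> = of_real (Re (Dg v)) * dpart 1 f (g x) + of_real (Im (Dg v)) * dpart \<i> f (g x)"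
    using dpart_lin[OF f] sub x by auto
  finally show ?thesis by (simp add: dpart_def Dg_def)
qed



definition SMv :: "complex list \<Rightarrow> (real \<Rightarrow> complex \<Rightarrow> complex) \<Rightarrow> bool" where
  "SMv vs F \<longleftrightarrow> (\<forall>t\<in>{0..1}. \<forall>x\<in>disk. dparts vs (F t) differentiable (at x within disk)) \<and>
     continuous_on ({0..1} \<times> disk) (\<lambda>(t,x). dparts vs (F t) x)"

definition SM :: "nat \<Rightarrow> (real \<Rightarrow> complex \<Rightarrow> complex) \<Rightarrow> bool" where
  "SM n F \<longleftrightarrow> (\<forall>vs\<in>lists {1, \<i>}. length vs \<le> n \<longrightarrow> SMv vs F)"

lemma SMv_snoc: "SMv (ys @ [y]) F = SMv ys (\<lambda>t. dpart y (F t))"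
  by (simp add: SMv_def dparts_append)

lemma SM_0: "SM 0 F \<longleftrightarrow> (\<forall>t\<in>{0..1}. \<forall>x\<in>disk. F t differentiable (at x within disk)) \<and>
     continuous_on ({0..1} \<times> disk) (\<lambda>(t,x). F t x)"
proof -
  have "SM 0 F \<longleftrightarrow> SMv [] F" unfolding SM_def by auto
  then show ?thesis by (simp add: SMv_def)
qed

lemma SMv_Nil: "SMv [] F = SM 0 F"
  unfolding SM_def by auto

lemma SM_mono: "SM n F \<Longrightarrow> m \<le> n \<Longrightarrow> SM m F"
  unfolding SM_def by auto

lemma SM_Suc: "SM (Suc n) F \<longleftrightarrow> SM 0 F \<and> SM n (\<lambda>t. dpart 1 (F t)) \<and> SM n (\<lambda>t. dpart \<i> (F t))"
proof
  assume A: "SM (Suc n) F"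
  have "SM 0 F" using SM_mono[OF A, of 0] by simp
  moreover have "SM n (\<lambda>t. dpart v (F t))" if v: "v \<in> {1, \<i>}" for v
    unfolding SM_def
  proof (intro ballI impI)
    fix vs :: "complex list" assume "vs \<in> lists {1, \<i>}" "length vs \<le> n"
    then have "vs @ [v] \<in> lists {1, \<i>}" "length (vs @ [v]) \<le> Suc n" using v by auto
    then have "SMv (vs @ [v]) F"
      using A unfolding SM_def by blast
    then show "SMv vs (\<lambda>t. dpart v (F t))" by (simp add: SMv_snoc)
  qed
  ultimately show "SM 0 F \<and> SM n (\<lambda>t. dpart 1 (F t)) \<and> SM n (\<lambda>t. dpart \<i> (F t))" by auto
next
  assume A: "SM 0 F \<and> SM n (\<lambda>t. dpart 1 (F t)) \<and> SM n (\<lambda>t. dpart \<i> (F t))"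
  show "SM (Suc n) F" unfolding SM_def
  proof (intro ballI impI)
    fix vs :: "complex list" assume vs: "vs \<in> lists {1, \<i>}" "length vs \<le> Suc n"
    show "SMv vs F"
    proof (cases vs rule: rev_cases)
      case Nil then show ?thesis using A by (simp add: SMv_Nil)
    next
      case (snoc ys y)
      then have y: "y = 1 \<or> y = \<i>" and ys: "ys \<in> lists {1, \<i>}" "length ys \<le> n" using vs by auto
      then have "SM n (\<lambda>t. dpart y (F t))" using A by auto
      then show ?thesis using ys unfolding snoc SMv_snoc SM_def by blast
    qed
  qed
qed

lemma SMv_cong:
  assumes "SMv vs F" "\<forall>t\<in>{0..1}. \<forall>x\<in>disk. F t x = G t x"
  shows "SMv vs G"
proof -
  have eq: "\<forall>t\<in>{0..1}. \<forall>x\<in>disk. dparts vs (F t) x = dparts vs (G t) x"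
    using assms(2) dparts_cong by blast
  have d: "\<forall>t\<in>{0..1}. \<forall>x\<in>disk. dparts vs (G t) differentiable (at x within disk)"
    using assms(1) eq diff_cong unfolding SMv_def by blast
  have "continuous_on ({0..1} \<times> disk) (\<lambda>(t,x). dparts vs (F t) x)"
    using assms(1) unfolding SMv_def by blast
  then have c: "continuous_on ({0..1} \<times> disk) (\<lambda>(t,x). dparts vs (G t) x)"
    by (rule continuous_on_eq) (use eq in auto)
  show ?thesis using d c unfolding SMv_def by blast
qed

lemma SM_cong:
  assumes "SM n F" "\<forall>t\<in>{0..1}. \<forall>x\<in>disk. F t x = G t x"
  shows "SM n G"
  using assms SMv_cong unfolding SM_def by blast

lemma SM_Suc_intro:
  assumes "SM 0 F" "\<And>v. v \<in> {1, \<i>} \<Longrightarrow> SM n (\<lambda>t. dpart v (F t))"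
  shows "SM (Suc n) F"
  using assms SM_Suc by auto

lemma SM_Suc_D:
  assumes "SM (Suc n) F" "v \<in> {1, \<i>}"
  shows "SM n (\<lambda>t. dpart v (F t))"
  using assms SM_Suc by auto

lemma SM_diff: "SM n F \<Longrightarrow> t \<in> {0..1} \<Longrightarrow> x \<in> disk \<Longrightarrow> F t differentiable (at x within disk)"
  using SM_mono[of n F 0] by (simp add: SM_0)

lemma SM_cont: "SM n F \<Longrightarrow> continuous_on ({0..1} \<times> disk) (\<lambda>(t,x). F t x)"
  using SM_mono[of n F 0] by (simp add: SM_0)



lemma fdw: "f differentiable (at x within disk) \<Longrightarrow>
   (f has_derivative frechet_derivative f (at x within disk)) (at x within disk)"
  using frechet_derivative_works by blast

lemma dpart_def': "dpart v f x = frechet_derivative f (at x within disk) v"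
  by (simp add: dpart_def)

lemma cont_split: "continuous_on A (\<lambda>(t,x). F t x) \<longleftrightarrow> continuous_on A (\<lambda>p. F (fst p) (snd p))"
  by (simp add: case_prod_beta')

lemma dpart_const: "x \<in> disk \<Longrightarrow> dpart v (\<lambda>y. c) x = 0"
  using dpart_eq[of x "\<lambda>y. c" "\<lambda>h. 0"] by (simp add: has_derivative_const)

lemma SM_const: "SM n (\<lambda>t x. c)"
proof (induction n arbitrary: c)
  case 0 then show ?case by (simp add: SM_0 cont_split)
next
  case (Suc n)
  show ?case
  proof (rule SM_Suc_intro)
    show "SM 0 (\<lambda>t x. c)" by (simp add: SM_0 cont_split)
    fix v :: complex
    show "SM n (\<lambda>t. dpart v (\<lambda>x. c))"
      by (rule SM_cong[OF Suc.IH[of 0]]) (simp add: dpart_const)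
  qed
qed

lemma dpart_lin_map:
  assumes "bounded_linear L" "f differentiable (at x within disk)" "x \<in> disk"
  shows "dpart v (\<lambda>y. L (f y)) x = L (dpart v f x)"
proof -
  have "((\<lambda>y. L (f y)) has_derivative (\<lambda>h. L (frechet_derivative f (at x within disk) h))) (at x within disk)"
    using bounded_linear.has_derivative[OF assms(1) fdw[OF assms(2)]] .
  then show ?thesis using dpart_eq[OF assms(3)] by (simp add: dpart_def)
qed

lemma SM_lin: "bounded_linear L \<Longrightarrow> SM n F \<Longrightarrow> SM n (\<lambda>t x. L (F t x))"
proof (induction n arbitrary: F)
  case 0
  have d: "(\<lambda>x. L (F t x)) differentiable (at x within disk)" if "t \<in> {0..1}" "x \<in> disk" for t x
    using bounded_linear.has_derivative[OF 0(1) fdw[OF SM_diff[OF 0(2) that]]] differentiableI by blast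
  have "continuous_on ({0..1} \<times> disk) (\<lambda>p. F (fst p) (snd p))" using SM_cont[OF 0(2)] cont_split by blast
  then have "continuous_on ({0..1} \<times> disk) (\<lambda>p. L (F (fst p) (snd p)))"
    using bounded_linear.continuous_on[OF 0(1)] by blast
  then show ?case using d by (simp add: SM_0 cont_split)
next
  case (Suc n)
  show ?case
  proof (rule SM_Suc_intro)
    show "SM 0 (\<lambda>t x. L (F t x))"
      using SM_mono[OF Suc.IH[OF Suc.prems(1) SM_mono[OF Suc.prems(2), of n]], of 0] by simp
    fix v :: complex assume v: "v \<in> {1, \<i>}"
    have "SM n (\<lambda>t x. L (dpart v (F t) x))" using Suc.IH[OF Suc.prems(1) SM_Suc_D[OF Suc.prems(2) v]] .
    then show "SM n (\<lambda>t. dpart v (\<lambda>x. L (F t x)))"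
      by (rule SM_cong) (simp add: dpart_lin_map[OF Suc.prems(1) SM_diff[OF Suc.prems(2)]])
  qed
qed

lemma dpart_add:
  assumes "f differentiable (at x within disk)" "g differentiable (at x within disk)" "x \<in> disk"
  shows "dpart v (\<lambda>y. f y + g y) x = dpart v f x + dpart v g x"
proof -
  have "((\<lambda>y. f y + g y) has_derivative (\<lambda>h. frechet_derivative f (at x within disk) h +
          frechet_derivative g (at x within disk) h)) (at x within disk)"
    using has_derivative_add[OF fdw[OF assms(1)] fdw[OF assms(2)]] .
  then show ?thesis using dpart_eq[OF assms(3)] by (simp add: dpart_def)
qed

lemma SM_add: "SM n F \<Longrightarrow> SM n G \<Longrightarrow> SM n (\<lambda>t x. F t x + G t x)"
proof (induction n arbitrary: F G)
  case 0
  have d: "(\<lambda>x. F t x + G t x) differentiable (at x within disk)" if "t \<in> {0..1}" "x \<in> disk" for t x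
    using has_derivative_add[OF fdw[OF SM_diff[OF 0(1) that]] fdw[OF SM_diff[OF 0(2) that]]]
      differentiableI by blast
  have "continuous_on ({0..1} \<times> disk) (\<lambda>p. F (fst p) (snd p))" using SM_cont[OF 0(1)] cont_split by blast
  moreover have "continuous_on ({0..1} \<times> disk) (\<lambda>p. G (fst p) (snd p))" using SM_cont[OF 0(2)] cont_split by blast
  ultimately have "continuous_on ({0..1} \<times> disk) (\<lambda>p. F (fst p) (snd p) + G (fst p) (snd p))"
    by (rule continuous_on_add)
  then show ?case using d by (simp add: SM_0 cont_split)
next
  case (Suc n)
  show ?case
  proof (rule SM_Suc_intro)
    show "SM 0 (\<lambda>t x. F t x + G t x)"
      using SM_mono[OF Suc.IH[OF SM_mono[OF Suc.prems(1), of n] SM_mono[OF Suc.prems(2), of n]], of 0] by simp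
    fix v :: complex assume v: "v \<in> {1, \<i>}"
    have "SM n (\<lambda>t x. dpart v (F t) x + dpart v (G t) x)"
      using Suc.IH[OF SM_Suc_D[OF Suc.prems(1) v] SM_Suc_D[OF Suc.prems(2) v]] .
    then show "SM n (\<lambda>t. dpart v (\<lambda>x. F t x + G t x))"
      by (rule SM_cong) (simp add: dpart_add[OF SM_diff[OF Suc.prems(1)] SM_diff[OF Suc.prems(2)]])
  qed
qed

lemma dpart_mult:
  assumes "f differentiable (at x within disk)" "g differentiable (at x within disk)" "x \<in> disk"
  shows "dpart v (\<lambda>y. f y * g y) x = f x * dpart v g x + dpart v f x * g x"
proof -
  have "((\<lambda>y. f y * g y) has_derivative (\<lambda>h. f x * frechet_derivative g (at x within disk) h +
          frechet_derivative f (at x within disk) h * g x)) (at x within disk)"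
    using has_derivative_mult[OF fdw[OF assms(1)] fdw[OF assms(2)]] .
  then show ?thesis using dpart_eq[OF assms(3)] by (simp add: dpart_def)
qed

lemma SM_mult: "SM n F \<Longrightarrow> SM n G \<Longrightarrow> SM n (\<lambda>t x. F t x * G t x)"
proof (induction n arbitrary: F G)
  case 0
  have d: "(\<lambda>x. F t x * G t x) differentiable (at x within disk)" if "t \<in> {0..1}" "x \<in> disk" for t x
    using has_derivative_mult[OF fdw[OF SM_diff[OF 0(1) that]] fdw[OF SM_diff[OF 0(2) that]]]
      differentiableI by blast
  have "continuous_on ({0..1} \<times> disk) (\<lambda>p. F (fst p) (snd p))" using SM_cont[OF 0(1)] cont_split by blast
  moreover have "continuous_on ({0..1} \<times> disk) (\<lambda>p. G (fst p) (snd p))" using SM_cont[OF 0(2)] cont_split by blast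
  ultimately have "continuous_on ({0..1} \<times> disk) (\<lambda>p. F (fst p) (snd p) * G (fst p) (snd p))"
    by (rule continuous_on_mult)
  then show ?case using d by (simp add: SM_0 cont_split)
next
  case (Suc n)
  have F: "SM n F" and G: "SM n G" using Suc.prems SM_mono by auto
  show ?case
  proof (rule SM_Suc_intro)
    show "SM 0 (\<lambda>t x. F t x * G t x)"
      using SM_mono[OF Suc.IH[OF F G], of 0] by simp
    fix v :: complex assume v: "v \<in> {1, \<i>}"
    have "SM n (\<lambda>t x. F t x * dpart v (G t) x + dpart v (F t) x * G t x)"
      using SM_add[OF Suc.IH[OF F SM_Suc_D[OF Suc.prems(2) v]] Suc.IH[OF SM_Suc_D[OF Suc.prems(1) v] G]] .
    then show "SM n (\<lambda>t. dpart v (\<lambda>x. F t x * G t x))"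
      by (rule SM_cong) (simp add: dpart_mult[OF SM_diff[OF Suc.prems(1)] SM_diff[OF Suc.prems(2)]])
  qed
qed



lemma cont_fam_comp:
  assumes "continuous_on ({0..1} \<times> disk) (\<lambda>(t,x). F t x)"
    and "continuous_on ({0..1} \<times> disk) (\<lambda>(t,x). K t x)"
    and "\<forall>t\<in>{0..1}. \<forall>x\<in>disk. K t x \<in> disk"
  shows "continuous_on ({0..1} \<times> disk) (\<lambda>(t,x). F t (K t x))"
proof -
  have c1: "continuous_on ({0..1} \<times> disk) (\<lambda>p. (fst p, K (fst p) (snd p)))"
    using assms(2) unfolding cont_split by (intro continuous_intros) auto
  have c2: "continuous_on ({0..1} \<times> disk) (\<lambda>p. F (fst p) (snd p))" using assms(1) cont_split by blast
  have "(\<lambda>p. (fst p, K (fst p) (snd p))) ` ({0..1} \<times> disk) \<subseteq> {0..1} \<times> disk"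
    using assms(3) by auto
  from continuous_on_compose2[OF c2 c1 this]
  show ?thesis unfolding cont_split by simp
qed

lemma dpart_holo:
  assumes h: "h holomorphic_on U" "open U" and f: "f differentiable (at x within disk)"
    and x: "x \<in> disk" and fx: "f x \<in> U"
  shows "dpart v (\<lambda>y. h (f y)) x = deriv h (f x) * dpart v f x"
proof -
  have "(h has_field_derivative deriv h (f x)) (at (f x) within f ` disk)"
    using holomorphic_derivI[OF h fx] .
  then have hd: "(h has_derivative (\<lambda>z. deriv h (f x) * z)) (at (f x) within f ` disk)"
    by (simp add: has_field_derivative_imp_has_derivative)
  have "((h \<circ> f) has_derivative ((\<lambda>z. deriv h (f x) * z) \<circ> frechet_derivative f (at x within disk))) (at x within disk)"
    by (rule diff_chain_within[OF fdw[OF f] hd])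
  then show ?thesis using dpart_eq[OF x] by (simp add: dpart_def o_def)
qed

lemma SM_holo:
  "h holomorphic_on U \<Longrightarrow> open U \<Longrightarrow> SM n G \<Longrightarrow> (\<forall>t\<in>{0..1}. \<forall>x\<in>disk. G t x \<in> U)
   \<Longrightarrow> SM n (\<lambda>t x. h (G t x))"
proof (induction n arbitrary: h)
  case 0
  have d: "(\<lambda>x. h (G t x)) differentiable (at x within disk)" if tx: "t \<in> {0..1}" "x \<in> disk" for t x
  proof -
    have "(h has_field_derivative deriv h (G t x)) (at (G t x) within G t ` disk)"
      using holomorphic_derivI[OF 0(1,2)] 0(4) tx by blast
    then have "h differentiable (at (G t x) within G t ` disk)"
      using has_field_derivative_imp_has_derivative differentiableI by blast
    from differentiable_chain_within[OF SM_diff[OF 0(3) tx] this]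
    show ?thesis by (simp add: o_def)
  qed
  have ch: "continuous_on U h" using 0(1) holomorphic_on_imp_continuous_on by blast
  have "continuous_on ({0..1} \<times> disk) (\<lambda>p. G (fst p) (snd p))" using SM_cont[OF 0(3)] cont_split by blast
  moreover have "(\<lambda>p. G (fst p) (snd p)) ` ({0..1} \<times> disk) \<subseteq> U" using 0(4) by auto
  ultimately have "continuous_on ({0..1} \<times> disk) (\<lambda>p. h (G (fst p) (snd p)))"
    using continuous_on_compose2[OF ch] by blast
  then show ?case using d by (simp add: SM_0 cont_split)
next
  case (Suc n)
  have G: "SM n G" using Suc.prems SM_mono by auto
  show ?case
  proof (rule SM_Suc_intro)
    show "SM 0 (\<lambda>t x. h (G t x))"
      using SM_mono[OF Suc.IH[OF Suc.prems(1,2) G Suc.prems(4)], of 0] by simp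
    fix v :: complex assume v: "v \<in> {1, \<i>}"
    have dh: "deriv h holomorphic_on U" using holomorphic_deriv Suc.prems(1,2) by blast
    have "SM n (\<lambda>t x. deriv h (G t x) * dpart v (G t) x)"
      using SM_mult[OF Suc.IH[OF dh Suc.prems(2) G Suc.prems(4)] SM_Suc_D[OF Suc.prems(3) v]] .
    then show "SM n (\<lambda>t. dpart v (\<lambda>x. h (G t x)))"
      by (rule SM_cong) (simp add: dpart_holo[OF Suc.prems(1,2) SM_diff[OF Suc.prems(3)]] Suc.prems(4))
  qed
qed

lemma bl_ReC: "bounded_linear (\<lambda>z::complex. complex_of_real (Re z))"
  using bounded_linear_compose[OF bounded_linear_of_real bounded_linear_Re] by (simp add: o_def)

lemma bl_ImC: "bounded_linear (\<lambda>z::complex. complex_of_real (Im z))"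
  using bounded_linear_compose[OF bounded_linear_of_real bounded_linear_Im] by (simp add: o_def)

lemma SM_comp:
  "SM n F \<Longrightarrow> SM n K \<Longrightarrow> (\<forall>t\<in>{0..1}. \<forall>x\<in>disk. K t x \<in> disk)
   \<Longrightarrow> SM n (\<lambda>t x. F t (K t x))"
proof (induction n arbitrary: F)
  case 0
  have d: "(\<lambda>x. F t (K t x)) differentiable (at x within disk)" if tx: "t \<in> {0..1}" "x \<in> disk" for t x
  proof -
    have sub: "K t ` disk \<subseteq> disk" using 0(3) tx by auto
    have "F t differentiable (at (K t x) within disk)" using SM_diff[OF 0(1) tx(1)] 0(3) tx by blast
    then have "F t differentiable (at (K t x) within K t ` disk)"
      using differentiable_within_subset sub by blast
    from differentiable_chain_within[OF SM_diff[OF 0(2) tx] this]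
    show ?thesis by (simp add: o_def)
  qed
  have "continuous_on ({0..1} \<times> disk) (\<lambda>(t,x). F t (K t x))"
    using cont_fam_comp[OF SM_cont[OF 0(1)] SM_cont[OF 0(2)] 0(3)] .
  then show ?case using d by (simp add: SM_0)
next
  case (Suc n)
  have K: "SM n K" using Suc.prems SM_mono by auto
  show ?case
  proof (rule SM_Suc_intro)
    show "SM 0 (\<lambda>t x. F t (K t x))"
      using SM_mono[OF Suc.IH[OF SM_mono[OF Suc.prems(1), of n] K Suc.prems(3)], of 0] by simp
    fix v :: complex assume v: "v \<in> {1, \<i>}"
    have a: "SM n (\<lambda>t x. dpart 1 (F t) (K t x))" using Suc.IH[OF SM_Suc_D[OF Suc.prems(1)] K Suc.prems(3)] by simp
    have b: "SM n (\<lambda>t x. dpart \<i> (F t) (K t x))" using Suc.IH[OF SM_Suc_D[OF Suc.prems(1)] K Suc.prems(3)] by simp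
    have c: "SM n (\<lambda>t x. complex_of_real (Re (dpart v (K t) x)))"
      using SM_lin[OF bl_ReC SM_Suc_D[OF Suc.prems(2) v]] .
    have e: "SM n (\<lambda>t x. complex_of_real (Im (dpart v (K t) x)))"
      using SM_lin[OF bl_ImC SM_Suc_D[OF Suc.prems(2) v]] .
    have "SM n (\<lambda>t x. complex_of_real (Re (dpart v (K t) x)) * dpart 1 (F t) (K t x) +
                     complex_of_real (Im (dpart v (K t) x)) * dpart \<i> (F t) (K t x))"
      using SM_add[OF SM_mult[OF c a] SM_mult[OF e b]] .
    then show "SM n (\<lambda>t. dpart v (\<lambda>x. F t (K t x)))"
    proof (rule SM_cong, intro ballI)
      fix t :: real and x :: complex assume tx: "t \<in> {0..1}" "x \<in> disk"
      have sub: "K t ` disk \<subseteq> disk" using Suc.prems(3) tx by auto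
      show "complex_of_real (Re (dpart v (K t) x)) * dpart 1 (F t) (K t x) +
            complex_of_real (Im (dpart v (K t) x)) * dpart \<i> (F t) (K t x) = dpart v (\<lambda>x. F t (K t x)) x"
        using dpart_comp[OF tx(2) sub SM_diff[OF Suc.prems(1) tx(1)] SM_diff[OF Suc.prems(2) tx]]
          sub tx by auto
    qed
  qed
qed



lemma smooth_SMv: "smooth_disk f \<Longrightarrow> vs \<in> lists {1, \<i>} \<Longrightarrow> SMv vs (\<lambda>t. f)"
proof -
  assume s: "smooth_disk f" and vs: "vs \<in> lists {1, \<i>}"
  then have d: "\<forall>x\<in>disk. dparts vs f differentiable (at x within disk)"
    unfolding smooth_disk_def by blast
  have "continuous_on disk (dparts vs f)"
    using d differentiable_imp_continuous_within continuous_on_eq_continuous_within by blast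
  then have "continuous_on ({0..1} \<times> disk) (\<lambda>p. dparts vs f (snd p))"
    by (rule continuous_on_compose2) (auto intro: continuous_intros)
  then have c: "continuous_on ({0..1} \<times> disk) (\<lambda>(t, x). dparts vs f x)"
    by (simp add: case_prod_beta')
  show ?thesis using c d unfolding SMv_def by blast
qed

lemma smooth_SM: "smooth_disk f \<Longrightarrow> SM n (\<lambda>t. f)"
  unfolding SM_def using smooth_SMv by blast

lemma SM_smooth: "(\<And>n. SM n (\<lambda>t. f)) \<Longrightarrow> smooth_disk f"
  unfolding smooth_disk_def
proof (intro ballI)
  fix vs x assume A: "\<And>n. SM n (\<lambda>t. f)" and vs: "vs \<in> lists {1, \<i>}" and x: "x \<in> disk"
  have "SMv vs (\<lambda>t. f)" using A[of "length vs"] vs unfolding SM_def by blast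
  then show "dparts vs f differentiable (at x within disk)" using x unfolding SMv_def by auto
qed

lemma smooth_cong: "smooth_disk f \<Longrightarrow> \<forall>x\<in>disk. f x = g x \<Longrightarrow> smooth_disk g"
  using smooth_SM SM_cong SM_smooth by metis

lemma smooth_comp: "smooth_disk f \<Longrightarrow> smooth_disk g \<Longrightarrow> \<forall>x\<in>disk. g x \<in> disk \<Longrightarrow>
   smooth_disk (\<lambda>x. f (g x))"
  by (rule SM_smooth, rule SM_comp[OF smooth_SM smooth_SM]) auto

lemma smooth_diff: "smooth_disk f \<Longrightarrow> x \<in> disk \<Longrightarrow> f differentiable (at x within disk)"
  unfolding smooth_disk_def using dparts_Nil by (metis lists.Nil)

lemma jac_alg:
  fixes a b p q :: complex
  shows "Im (cnj (of_real (Re p) * a + of_real (Im p) * b) * (of_real (Re q) * a + of_real (Im q) * b))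
    = Im (cnj a * b) * Im (cnj p * q)"
  by (simp add: algebra_simps)

lemma jac_comp:
  assumes x: "x \<in> disk" and sub: "g ` disk \<subseteq> disk"
    and f: "f differentiable (at (g x) within disk)" and g: "g differentiable (at x within disk)"
  shows "jac_det (\<lambda>y. f (g y)) x = jac_det f (g x) * jac_det g x"
  unfolding jac_det_def dpart_comp[OF assms] by (rule jac_alg)

lemma dpart_id: "x \<in> disk \<Longrightarrow> dpart v (\<lambda>y. y) x = v"
  using dpart_eq[of x "\<lambda>y. y" "\<lambda>h. h"] by (simp add: has_derivative_ident)

lemma jac_id_cong: "x \<in> disk \<Longrightarrow> \<forall>y\<in>disk. f y = y \<Longrightarrow> jac_det f x = 1"
  unfolding jac_det_def using dpart_cong[of f "\<lambda>y. y" x] dpart_id by simp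

definition good :: "(complex \<Rightarrow> complex) \<Rightarrow> (complex \<Rightarrow> complex) \<Rightarrow> bool" where
  "good f g \<longleftrightarrow> (\<forall>x\<in>disk. f x \<in> disk \<and> g x \<in> disk \<and> g (f x) = x \<and> f (g x) = x) \<and>
     smooth_disk f \<and> smooth_disk g \<and> (\<forall>x\<in>disk. jac_det f x > 0) \<and> (\<forall>x\<in>disk. jac_det g x > 0)"

lemma good_sym: "good f g \<Longrightarrow> good g f"
  unfolding good_def by auto

lemma good_Diff: "good f g \<Longrightarrow> f \<in> Diff_plus"
proof -
  assume G: "good f g"
  have im: "f ` disk = disk"
  proof
    show "f ` disk \<subseteq> disk" using G unfolding good_def by auto
    show "disk \<subseteq> f ` disk"
    proof
      fix y assume "y \<in> disk"
      then have "y = f (g y)" "g y \<in> disk" using G unfolding good_def by auto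
      then show "y \<in> f ` disk" by blast
    qed
  qed
  have inj: "inj_on f disk" using G unfolding good_def by (metis inj_onI)
  have "\<forall>y\<in>disk. g y = inv_into disk f y"
  proof
    fix y assume y: "y \<in> disk"
    then have "y = f (g y)" "g y \<in> disk" using G unfolding good_def by auto
    then show "g y = inv_into disk f y" using inv_into_f_f[OF inj] by metis
  qed
  then have "smooth_disk (inv_into disk f)" using smooth_cong G unfolding good_def by blast
  then show ?thesis using G im inj unfolding good_def Diff_plus_def by auto
qed

lemma good_comp:
  assumes "good f g" "good f' g'"
  shows "good (\<lambda>x. f (f' x)) (\<lambda>x. g' (g x))"
proof -
  have m: "\<forall>x\<in>disk. f x \<in> disk" "\<forall>x\<in>disk. g x \<in> disk" "\<forall>x\<in>disk. f' x \<in> disk" "\<forall>x\<in>disk. g' x \<in> disk"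
    using assms unfolding good_def by auto
  have s: "smooth_disk f" "smooth_disk g" "smooth_disk f'" "smooth_disk g'"
    using assms unfolding good_def by auto
  have sub: "f' ` disk \<subseteq> disk" "g ` disk \<subseteq> disk" using m by auto
  have j1: "jac_det (\<lambda>x. f (f' x)) x > 0" if x: "x \<in> disk" for x
    using jac_comp[OF x sub(1) smooth_diff[OF s(1)] smooth_diff[OF s(3) x]] m x assms
    unfolding good_def by (auto intro!: mult_pos_pos)
  have j2: "jac_det (\<lambda>x. g' (g x)) x > 0" if x: "x \<in> disk" for x
    using jac_comp[OF x sub(2) smooth_diff[OF s(4)] smooth_diff[OF s(2) x]] m x assms
    unfolding good_def by (auto intro!: mult_pos_pos)
  show ?thesis unfolding good_def
    using assms j1 j2 smooth_comp[OF s(1) s(3) m(3)] smooth_comp[OF s(4) s(2) m(2)]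
    unfolding good_def by auto
qed

lemma Diff_good: "T \<in> Diff_plus \<Longrightarrow> good T (inv_into disk T)"
proof -
  assume T: "T \<in> Diff_plus"
  define S where "S = inv_into disk T"
  have im: "T ` disk = disk" and inj: "inj_on T disk" and sT: "smooth_disk T" and sS: "smooth_disk S"
    and jT: "\<forall>x\<in>disk. jac_det T x > 0"
    using T unfolding Diff_plus_def S_def by auto
  have Sd: "\<forall>x\<in>disk. S x \<in> disk" using im inv_into_into unfolding S_def by metis
  have TS: "\<forall>x\<in>disk. T (S x) = x" using im f_inv_into_f unfolding S_def by metis
  have ST: "\<forall>x\<in>disk. S (T x) = x" using inj inv_into_f_f unfolding S_def by metis
  have Td: "\<forall>x\<in>disk. T x \<in> disk" using im by auto
  have jS: "jac_det S x > 0" if x: "x \<in> disk" for x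
  proof -
    have "jac_det (\<lambda>y. T (S y)) x = jac_det T (S x) * jac_det S x"
      using jac_comp[OF x _ smooth_diff[OF sT] smooth_diff[OF sS x]] Sd x by auto
    moreover have "jac_det (\<lambda>y. T (S y)) x = 1" using jac_id_cong[OF x] TS by simp
    moreover have "jac_det T (S x) > 0" using jT Sd x by auto
    ultimately show ?thesis by (metis zero_less_mult_pos zero_less_one)
  qed
  show ?thesis unfolding good_def S_def[symmetric]
    using Sd TS ST Td sT sS jT jS by auto
qed

lemma Diff_comp: "a \<in> Diff_plus \<Longrightarrow> b \<in> Diff_plus \<Longrightarrow> (\<lambda>x. a (b x)) \<in> Diff_plus"
  using good_Diff good_comp Diff_good by blast



lemma half_Diff: "T \<in> half_set P \<Longrightarrow> T \<in> Diff_plus"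
  by (simp add: half_set_def)

lemma path_SM: "smooth_path_in S H \<Longrightarrow> S \<subseteq> Diff_plus \<Longrightarrow> SM n H"
  unfolding SM_def SMv_def smooth_path_in_def smooth_disk_def Diff_plus_def by blast

lemma SM_path: "(\<forall>t\<in>{0..1}. H t \<in> S) \<Longrightarrow> (\<And>n. SM n H) \<Longrightarrow> smooth_path_in S H"
  unfolding smooth_path_in_def
proof (intro conjI ballI)
  fix vs assume A: "\<And>n. SM n H" and vs: "vs \<in> lists {1, \<i>}"
  have "SMv vs H" using A[of "length vs"] vs unfolding SM_def by blast
  then show "continuous_on ({0..1} \<times> disk) (\<lambda>(t, x). dparts vs (H t) x)" unfolding SMv_def by blast
qed auto

lemma cont_reparam:
  assumes "continuous_on ({0..1} \<times> disk) (\<lambda>(s,x). G s x)" "continuous_on I \<phi>" "\<phi> ` I \<subseteq> {0..1}"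
  shows "continuous_on (I \<times> disk) (\<lambda>(t,x). G (\<phi> t) x)"
proof -
  have "continuous_on (I \<times> disk) (\<lambda>p. \<phi> (fst p))"
    by (rule continuous_on_compose2[OF assms(2)]) (auto intro: continuous_intros)
  then have c1: "continuous_on (I \<times> disk) (\<lambda>p. (\<phi> (fst p), snd p))"
    by (intro continuous_intros)
  have c2: "continuous_on ({0..1} \<times> disk) (\<lambda>p. G (fst p) (snd p))" using assms(1) cont_split by blast
  have "(\<lambda>p. (\<phi> (fst p), snd p)) ` (I \<times> disk) \<subseteq> {0..1} \<times> disk" using assms(3) by auto
  from continuous_on_compose2[OF c2 c1 this]
  show ?thesis unfolding cont_split by simp
qed

lemma SM_reparam:
  assumes "SM n H" "continuous_on {0..1} \<phi>" "\<phi> ` {0..1} \<subseteq> {0..1}"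
  shows "SM n (\<lambda>t. H (\<phi> t))"
  unfolding SM_def
proof (intro ballI impI)
  fix vs assume vs: "vs \<in> lists {1, \<i>}" "length vs \<le> n"
  then have S: "SMv vs H" using assms(1) unfolding SM_def by blast
  have d: "\<forall>t\<in>{0..1}. \<forall>x\<in>disk. dparts vs (H (\<phi> t)) differentiable (at x within disk)"
    using S assms(3) unfolding SMv_def by blast
  have "continuous_on ({0..1} \<times> disk) (\<lambda>(t,x). dparts vs (H (\<phi> t)) x)"
    using cont_reparam[of "\<lambda>s. dparts vs (H s)", OF _ assms(2,3)] S unfolding SMv_def by blast
  then show "SMv vs (\<lambda>t. H (\<phi> t))" using d unfolding SMv_def by blast
qed

lemma pc_refl: "T \<in> S \<Longrightarrow> S \<subseteq> Diff_plus \<Longrightarrow> (T, T) \<in> pc_rel S"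
proof -
  assume T: "T \<in> S" and S: "S \<subseteq> Diff_plus"
  then have "smooth_disk T" unfolding Diff_plus_def by blast
  then have "SM n (\<lambda>t. T)" for n by (rule smooth_SM)
  then have "smooth_path_in S (\<lambda>t. T)" using SM_path[of "\<lambda>t. T" S] T by blast
  then have "T \<in> S \<and> T \<in> S \<and> (\<exists>H. smooth_path_in S H \<and> (\<forall>x\<in>disk. H 0 x = T x) \<and> (\<forall>x\<in>disk. H 1 x = T x))"
    using T by (intro conjI exI[of _ "\<lambda>t. T"]) auto
  then show ?thesis unfolding pc_rel_def by simp
qed

lemma pc_sym: "(T, T') \<in> pc_rel S \<Longrightarrow> S \<subseteq> Diff_plus \<Longrightarrow> (T', T) \<in> pc_rel S"
proof -
  assume A: "(T, T') \<in> pc_rel S" and S: "S \<subseteq> Diff_plus"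
  then obtain H where H: "smooth_path_in S H" "\<forall>x\<in>disk. H 0 x = T x" "\<forall>x\<in>disk. H 1 x = T' x"
    and TT: "T \<in> S" "T' \<in> S" using A unfolding pc_rel_def by blast
  have c: "continuous_on {0..1::real} (\<lambda>t. 1 - t)" by (intro continuous_intros)
  have i: "(\<lambda>t::real. 1 - t) ` {0..1} \<subseteq> {0..1}" by auto
  have "SM n (\<lambda>t. H (1 - t))" for n
    by (rule SM_reparam[OF path_SM[OF H(1) S] c i])
  moreover have "\<forall>t\<in>{0..1}. H (1 - t) \<in> S"
  proof
    fix t :: real assume "t \<in> {0..1}"
    then have "1 - t \<in> {0..1}" by auto
    then show "H (1 - t) \<in> S" using H(1) unfolding smooth_path_in_def by blast
  qed
  ultimately have "smooth_path_in S (\<lambda>t. H (1 - t))" using SM_path[of "\<lambda>t. H (1 - t)" S] by blast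
  then have "T' \<in> S \<and> T \<in> S \<and> (\<exists>H. smooth_path_in S H \<and> (\<forall>x\<in>disk. H 0 x = T' x) \<and> (\<forall>x\<in>disk. H 1 x = T x))"
    using H TT by (intro conjI exI[of _ "\<lambda>t. H (1 - t)"]) auto
  then show ?thesis unfolding pc_rel_def by simp
qed

lemma pc_trans:
  assumes "(T, T') \<in> pc_rel S" "(T', T'') \<in> pc_rel S" "S \<subseteq> Diff_plus"
  shows "(T, T'') \<in> pc_rel S"
proof -
  obtain H where H: "smooth_path_in S H" "\<forall>x\<in>disk. H 0 x = T x" "\<forall>x\<in>disk. H 1 x = T' x"
    and TT: "T \<in> S" "T' \<in> S" using assms(1) unfolding pc_rel_def by auto
  obtain K where K: "smooth_path_in S K" "\<forall>x\<in>disk. K 0 x = T' x" "\<forall>x\<in>disk. K 1 x = T'' x"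
    and TT': "T'' \<in> S" using assms(2) unfolding pc_rel_def by auto
  define L where "L = (\<lambda>t::real. if t \<le> 1/2 then H (2 * t) else K (2 * t - 1))"
  have HS: "\<forall>t\<in>{0..1}. H t \<in> S" and KS: "\<forall>t\<in>{0..1}. K t \<in> S"
    using H(1) K(1) unfolding smooth_path_in_def by auto
  have LS: "\<forall>t\<in>{0..1}. L t \<in> S" unfolding L_def using HS KS by auto
  have HK: "\<forall>x\<in>disk. H 1 x = K 0 x" using H(3) K(2) by auto
  have "SMv vs L" if vs: "vs \<in> lists {1, \<i>}" for vs
  proof -
    have SH: "SMv vs H" using path_SM[OF H(1) assms(3)] vs unfolding SM_def by blast
    have SK: "SMv vs K" using path_SM[OF K(1) assms(3)] vs unfolding SM_def by blast
    have d: "\<forall>t\<in>{0..1}. \<forall>x\<in>disk. dparts vs (L t) differentiable (at x within disk)"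
    proof (intro ballI)
      fix t :: real and x :: complex assume "t \<in> {0..1}" "x \<in> disk"
      then have "L t \<in> Diff_plus" using LS assms(3) by auto
      then show "dparts vs (L t) differentiable (at x within disk)"
        using vs \<open>x \<in> disk\<close> unfolding Diff_plus_def smooth_disk_def by blast
    qed
    have c1: "continuous_on ({0..1/2} \<times> disk) (\<lambda>(t,x). dparts vs (H (2 * t)) x)"
      by (rule cont_reparam) (use SH in \<open>auto simp: SMv_def intro!: continuous_intros\<close>)
    have c2: "continuous_on ({1/2..1} \<times> disk) (\<lambda>(t,x). dparts vs (K (2 * t - 1)) x)"
      by (rule cont_reparam) (use SK in \<open>auto simp: SMv_def intro!: continuous_intros\<close>)
    have eq1: "\<forall>x\<in>disk. dparts vs (H 1) x = dparts vs (K 0) x" using dparts_cong[OF HK] by blast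
    have c1': "continuous_on ({0..1/2} \<times> disk) (\<lambda>(t,x). dparts vs (L t) x)"
      by (rule continuous_on_eq[OF c1]) (auto simp: L_def)
    have c2': "continuous_on ({1/2..1} \<times> disk) (\<lambda>(t,x). dparts vs (L t) x)"
    proof (rule continuous_on_eq[OF c2])
      fix p :: "real \<times> complex" assume "p \<in> {1/2..1} \<times> disk"
      then obtain t x where p: "p = (t, x)" "t \<in> {1/2..1}" "x \<in> disk" by auto
      show "(\<lambda>(t,x). dparts vs (K (2 * t - 1)) x) p = (\<lambda>(t,x). dparts vs (L t) x) p"
      proof (cases "t = 1/2")
        case True
        then have "2 * t - 1 = 0" "2 * t = 1" by simp_all
        then show ?thesis using p eq1 True by (simp add: L_def)
      next
        case False then show ?thesis using p by (simp add: L_def)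
      qed
    qed
    have "continuous_on ({0..1/2} \<times> disk \<union> {1/2..1} \<times> disk) (\<lambda>(t,x). dparts vs (L t) x)"
      by (rule continuous_on_closed_Un[OF _ _ c1' c2']) (simp_all add: closed_Times closed_disk)
    moreover have "{0..1/2} \<times> disk \<union> {1/2..1} \<times> disk = {0..1::real} \<times> disk" by auto
    ultimately show ?thesis using d unfolding SMv_def by simp
  qed
  then have "SM n L" for n unfolding SM_def by blast
  then have "smooth_path_in S L" using SM_path[of L S] LS by blast
  moreover have "\<forall>x\<in>disk. L 0 x = T x" "\<forall>x\<in>disk. L 1 x = T'' x" using H(2) K(3) by (auto simp: L_def)
  ultimately have "T \<in> S \<and> T'' \<in> S \<and> (\<exists>H. smooth_path_in S H \<and> (\<forall>x\<in>disk. H 0 x = T x) \<and> (\<forall>x\<in>disk. H 1 x = T'' x))"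
    using TT TT' by (intro conjI exI[of _ L]) auto
  then show ?thesis unfolding pc_rel_def by simp
qed

lemma half_sub: "half_set P \<subseteq> Diff_plus" unfolding half_set_def by blast

lemma pc_rel_sub: "pc_rel S \<subseteq> S \<times> S" unfolding pc_rel_def by blast

lemma pc_equiv: "equiv (half_set P) (pc_rel (half_set P))"
proof (rule equivI)
  show "pc_rel (half_set P) \<subseteq> half_set P \<times> half_set P" by (rule pc_rel_sub)
  show "refl_on (half_set P) (pc_rel (half_set P))"
    unfolding refl_on_def using pc_refl[OF _ half_sub] by simp
  show "sym (pc_rel (half_set P))" by (rule symI) (rule pc_sym[OF _ half_sub])
  show "trans (pc_rel (half_set P))" by (rule transI) (rule pc_trans[OF _ _ half_sub])
qed



lemma SM_id: "SM n (\<lambda>t x. x)"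
proof (induction n)
  case 0
  have "(\<lambda>x. x) differentiable (at x within disk)" for x :: complex
    by (rule differentiableI[OF has_derivative_ident])
  moreover have "continuous_on ({0..1::real} \<times> disk) (\<lambda>p. snd p)" by (intro continuous_intros)
  ultimately show ?case by (simp add: SM_0 cont_split)
next
  case (Suc n)
  show ?case
  proof (rule SM_Suc_intro)
    show "SM 0 (\<lambda>t x. x)" using SM_mono[OF Suc.IH] by simp
    fix v :: complex
    show "SM n (\<lambda>t. dpart v (\<lambda>x. x))"
      by (rule SM_cong[OF SM_const[of n v]]) (simp add: dpart_id)
  qed
qed

lemma smooth_id: "smooth_disk (\<lambda>x. x)"
  by (rule SM_smooth) (rule SM_id)

lemma good_id: "good (\<lambda>x. x) (\<lambda>x. x)"
  unfolding good_def using smooth_id jac_id_cong by auto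

lemma id_Diff: "id \<in> Diff_plus"
  using good_Diff[OF good_id] by (simp add: id_def)

lemma half_rot_circle: "x \<in> circle \<Longrightarrow> half_rot x \<in> circle"
  by (simp add: half_rot_def circle_def)

lemma circle_disk: "circle \<subseteq> disk"
  by (auto simp: circle_def disk_def)

lemma id_half: "id \<in> half_set P"
  unfolding half_set_def using id_Diff by simp

lemma comp_half:
  assumes "a \<in> half_set P" "b \<in> half_set P"
  shows "a \<circ> b \<in> half_set P"
proof -
  have D: "a \<circ> b \<in> Diff_plus" using Diff_comp[OF half_Diff[OF assms(1)] half_Diff[OF assms(2)]]
    by (simp add: o_def)
  have "(a \<circ> b) ` P = a ` (b ` P)" by (simp add: image_comp)
  then have P: "(a \<circ> b) ` P = P" using assms unfolding half_set_def by simp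
  have ba: "(\<forall>x\<in>circle. a x = half_rot x) \<or> (\<forall>x\<in>circle. a x = x)"
    and bb: "(\<forall>x\<in>circle. b x = half_rot x) \<or> (\<forall>x\<in>circle. b x = x)"
    using assms unfolding half_set_def by auto
  have hh: "half_rot (half_rot x) = x" for x by (simp add: half_rot_def)
  have "(\<forall>x\<in>circle. (a \<circ> b) x = half_rot x) \<or> (\<forall>x\<in>circle. (a \<circ> b) x = x)"
    using ba bb half_rot_circle hh by auto
  then show ?thesis using D P unfolding half_set_def by auto
qed

lemma pc_comp:
  assumes "(a, a') \<in> pc_rel (half_set P)" "(b, b') \<in> pc_rel (half_set P)"
  shows "(a \<circ> b, a' \<circ> b') \<in> pc_rel (half_set P)"
proof -
  let ?S = "half_set P"
  obtain H where H: "smooth_path_in ?S H" "\<forall>x\<in>disk. H 0 x = a x" "\<forall>x\<in>disk. H 1 x = a' x"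
    and TT: "a \<in> ?S" "a' \<in> ?S" using assms(1) unfolding pc_rel_def by blast
  obtain K where K: "smooth_path_in ?S K" "\<forall>x\<in>disk. K 0 x = b x" "\<forall>x\<in>disk. K 1 x = b' x"
    and TT': "b \<in> ?S" "b' \<in> ?S" using assms(2) unfolding pc_rel_def by blast
  have HS: "\<forall>t\<in>{0..1}. H t \<in> ?S" and KS: "\<forall>t\<in>{0..1}. K t \<in> ?S"
    using H(1) K(1) unfolding smooth_path_in_def by auto
  have Kd: "\<forall>t\<in>{0..1}. \<forall>x\<in>disk. K t x \<in> disk"
    using KS half_Diff unfolding Diff_plus_def by blast
  have "SM n (\<lambda>t x. H t (K t x))" for n
    using SM_comp[OF path_SM[OF H(1) half_sub] path_SM[OF K(1) half_sub] Kd] .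
  moreover have "\<forall>t\<in>{0..1}. (\<lambda>x. H t (K t x)) \<in> ?S"
    using HS KS comp_half by (simp add: o_def)
  ultimately have sp: "smooth_path_in ?S (\<lambda>t x. H t (K t x))"
    using SM_path[of "\<lambda>t x. H t (K t x)" ?S] by blast
  have bd: "b x \<in> disk" "b' x \<in> disk" if "x \<in> disk" for x
    using TT' half_Diff that unfolding Diff_plus_def by blast+
  have e0: "\<forall>x\<in>disk. H 0 (K 0 x) = (a \<circ> b) x" using H(2) K(2) bd by simp
  have e1: "\<forall>x\<in>disk. H 1 (K 1 x) = (a' \<circ> b') x" using H(3) K(3) bd by simp
  have "a \<circ> b \<in> ?S" "a' \<circ> b' \<in> ?S" using comp_half TT TT' by auto
  then have "a \<circ> b \<in> ?S \<and> a' \<circ> b' \<in> ?S \<and> (\<exists>H. smooth_path_in ?S H \<and> (\<forall>x\<in>disk. H 0 x = (a \<circ> b) x)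
      \<and> (\<forall>x\<in>disk. H 1 x = (a' \<circ> b') x))"
    using sp e0 e1 by (intro conjI exI[of _ "\<lambda>t x. H t (K t x)"]) auto
  then show ?thesis unfolding pc_rel_def by simp
qed

lemma pc_eqdisk:
  assumes "a \<in> half_set P" "b \<in> half_set P" "\<forall>x\<in>disk. a x = b x"
  shows "(a, b) \<in> pc_rel (half_set P)"
proof -
  have "(b, b) \<in> pc_rel (half_set P)" using pc_refl[OF assms(2) half_sub] .
  then obtain H where H: "smooth_path_in (half_set P) H" "\<forall>x\<in>disk. H 0 x = b x" "\<forall>x\<in>disk. H 1 x = b x"
    unfolding pc_rel_def by blast
  have "a \<in> half_set P \<and> b \<in> half_set P \<and> (\<exists>H. smooth_path_in (half_set P) H \<and> (\<forall>x\<in>disk. H 0 x = a x)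
      \<and> (\<forall>x\<in>disk. H 1 x = b x))"
    using H assms by (intro conjI exI[of _ H]) auto
  then show ?thesis unfolding pc_rel_def by simp
qed

lemma bdry_pres:
  assumes "(T, T') \<in> pc_rel (half_set P)" "\<forall>x\<in>circle. T x = half_rot x"
  shows "\<forall>x\<in>circle. T' x = half_rot x"
proof -
  obtain H where H: "smooth_path_in (half_set P) H" "\<forall>x\<in>disk. H 0 x = T x" "\<forall>x\<in>disk. H 1 x = T' x"
    using assms(1) unfolding pc_rel_def by blast
  have HS: "\<forall>t\<in>{0..1}. H t \<in> half_set P" using H(1) unfolding smooth_path_in_def by auto
  have one: "(1::complex) \<in> circle" "(1::complex) \<in> disk" by (auto simp: circle_def disk_def)
  have c: "continuous_on ({0..1} \<times> disk) (\<lambda>(t,x). H t x)"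
    using SM_cont[OF path_SM[OF H(1) half_sub, of 0]] .
  then have c': "continuous_on ({0..1} \<times> disk) (\<lambda>p. H (fst p) (snd p))" using cont_split by blast
  have "continuous_on {0..1::real} (\<lambda>t. H (fst (t, 1::complex)) (snd (t, 1::complex)))"
    by (rule continuous_on_compose2[OF c']) (auto intro!: continuous_intros simp: one)
  then have "continuous_on {0..1::real} (\<lambda>t. Re (H t 1))" by (auto intro: continuous_intros)
  moreover have vals: "Re (H t 1) = 1 \<or> Re (H t 1) = -1" if "t \<in> {0..1}" for t
  proof -
    have "H t \<in> half_set P" using HS that by blast
    then have "H t 1 = -1 \<or> H t 1 = 1" using one unfolding half_set_def half_rot_def by blast
    then show ?thesis by auto
  qed
  moreover have "Re (H 0 1) = -1" using H(2) assms(2) one by (auto simp: half_rot_def)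
  ultimately have "Re (H 1 1) = -1"
  proof -
    assume cR: "continuous_on {0..1::real} (\<lambda>t. Re (H t 1))"
      and v: "\<And>t. t \<in> {0..1} \<Longrightarrow> Re (H t 1) = 1 \<or> Re (H t 1) = -1"
      and h0: "Re (H 0 1) = -1"
    show ?thesis
    proof (rule ccontr)
      assume "Re (H 1 1) \<noteq> -1"
      then have "Re (H 1 1) = 1" using v[of 1] by auto
      then obtain t where t: "0 \<le> t" "t \<le> 1" "Re (H t 1) = 0"
        using IVT'[of "\<lambda>t. Re (H t 1)" 0 0 1, OF _ _ _ cR] h0 by auto
      then show False using v[of t] by auto
    qed
  qed
  then have "H 1 1 \<noteq> 1" by auto
  then have "\<forall>x\<in>circle. H 1 x = half_rot x" using HS one unfolding half_set_def by auto
  then show ?thesis using H(3) circle_disk by (metis subsetD)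
qed

lemma bdry_pres_id:
  assumes "(T, T') \<in> pc_rel (half_set P)" "\<forall>x\<in>circle. T x = x"
  shows "\<not> (\<forall>x\<in>circle. T' x = half_rot x)"
proof
  assume "\<forall>x\<in>circle. T' x = half_rot x"
  then have "\<forall>x\<in>circle. T x = half_rot x" using bdry_pres[OF pc_sym[OF assms(1) half_sub]] by blast
  moreover have "(1::complex) \<in> circle" by (simp add: circle_def)
  ultimately show False using assms(2) by (force simp: half_rot_def)
qed



lemma MCG_mult:
  assumes a: "a \<in> half_set P" and b: "b \<in> half_set P"
  shows "monoid.mult (MCG_half P) (pc_rel (half_set P) `` {a}) (pc_rel (half_set P) `` {b})
       = pc_rel (half_set P) `` {a \<circ> b}"
proof -
  let ?C = "pc_rel (half_set P)"
  have E: "equiv (half_set P) ?C" by (rule pc_equiv)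
  have "a \<in> ?C `` {a}" using equiv_class_self[OF E a] .
  then have a0: "(SOME a'. a' \<in> ?C `` {a}) \<in> ?C `` {a}" by (rule someI[of "\<lambda>z. z \<in> ?C `` {a}"])
  have "b \<in> ?C `` {b}" using equiv_class_self[OF E b] .
  then have b0: "(SOME b'. b' \<in> ?C `` {b}) \<in> ?C `` {b}" by (rule someI[of "\<lambda>z. z \<in> ?C `` {b}"])
  have "(a \<circ> b, (SOME a'. a' \<in> ?C `` {a}) \<circ> (SOME b'. b' \<in> ?C `` {b})) \<in> ?C"
    using pc_comp a0 b0 by blast
  then have "?C `` {a \<circ> b} = ?C `` {(SOME a'. a' \<in> ?C `` {a}) \<circ> (SOME b'. b' \<in> ?C `` {b})}"
    using equiv_class_eq[OF E] by blast
  then show ?thesis by (simp add: MCG_half_def)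
qed

lemma hom_from_T:
  assumes T: "T \<in> half_set P" "\<forall>x\<in>circle. T x = half_rot x" "\<forall>x\<in>disk. T (T x) = x"
  shows "\<exists>\<sigma>. \<sigma> \<in> hom (integer_mod_group 2) (MCG_half P) \<and>
             (\<forall>k \<in> carrier (integer_mod_group 2). bdry_class (\<sigma> k) = k)"
proof -
  let ?C = "pc_rel (half_set P)"
  define r where "r = (\<lambda>k::int. if k = 0 then id else T)"
  define \<sigma> where "\<sigma> = (\<lambda>k. ?C `` {r k})"
  have E: "equiv (half_set P) ?C" by (rule pc_equiv)
  have car: "carrier (integer_mod_group 2) = {0, 1}" by (auto simp: carrier_integer_mod_group)
  have rS: "r k \<in> half_set P" for k using T id_half by (simp add: r_def)
  have TT: "T \<circ> T \<in> half_set P" using comp_half T by blast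
  have TTid: "?C `` {T \<circ> T} = ?C `` {id}"
    by (rule equiv_class_eq[OF E pc_eqdisk[OF TT id_half]]) (use T(3) in simp)
  have hom: "\<sigma> \<in> hom (integer_mod_group 2) (MCG_half P)"
  proof (rule homI)
    fix x assume "x \<in> carrier (integer_mod_group 2)"
    show "\<sigma> x \<in> carrier (MCG_half P)"
      unfolding \<sigma>_def by (simp add: MCG_half_def quotientI rS)
  next
    fix x y assume xy: "x \<in> carrier (integer_mod_group 2)" "y \<in> carrier (integer_mod_group 2)"
    have m: "\<sigma> x \<otimes>\<^bsub>MCG_half P\<^esub> \<sigma> y = ?C `` {r x \<circ> r y}"
      unfolding \<sigma>_def by (rule MCG_mult[OF rS rS])
    show "\<sigma> (x \<otimes>\<^bsub>integer_mod_group 2\<^esub> y) = \<sigma> x \<otimes>\<^bsub>MCG_half P\<^esub> \<sigma> y"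
      unfolding m using xy car TTid by (auto simp: \<sigma>_def r_def)
  qed
  have bd: "bdry_class (\<sigma> k) = k" if k: "k \<in> carrier (integer_mod_group 2)" for k
  proof -
    have k01: "k = 0 \<or> k = 1" using k car by auto
    have "r k \<in> ?C `` {r k}" using equiv_class_self[OF E rS] .
    then have s: "(SOME R. R \<in> \<sigma> k) \<in> \<sigma> k" unfolding \<sigma>_def by (rule someI[of "\<lambda>z. z \<in> ?C `` {r k}"])
    then have rel: "(r k, SOME R. R \<in> \<sigma> k) \<in> ?C" unfolding \<sigma>_def by simp
    show ?thesis
    proof (cases "k = 0")
      case True
      then have "\<forall>x\<in>circle. r k x = x" by (simp add: r_def)
      then have "\<not> (\<forall>x\<in>circle. (SOME R. R \<in> \<sigma> k) x = half_rot x)" using bdry_pres_id[OF rel] by blast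
      then show ?thesis using True by (simp add: bdry_class_def)
    next
      case False
      then have "k = 1" using k01 by simp
      have "\<forall>x\<in>circle. r k x = half_rot x" using False T(2) by (simp add: r_def)
      then have "\<forall>x\<in>circle. (SOME R. R \<in> \<sigma> k) x = half_rot x" using bdry_pres[OF rel] by blast
      then show ?thesis using \<open>k = 1\<close> by (simp add: bdry_class_def)
    qed
  qed
  show ?thesis using hom bd by blast
qed



lemma smooth_holo: "h holomorphic_on U \<Longrightarrow> open U \<Longrightarrow> disk \<subseteq> U \<Longrightarrow> smooth_disk h"
  by (rule SM_smooth, rule SM_holo[OF _ _ SM_id]) auto

lemma dpart_holo1:
  assumes "h holomorphic_on U" "open U" "disk \<subseteq> U" "x \<in> disk"
  shows "dpart v h x = deriv h x * v"
proof -
  have "(\<lambda>y. y) differentiable (at x within disk)" by (rule differentiableI[OF has_derivative_ident])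
  from dpart_holo[OF assms(1,2) this assms(4)] assms(3,4) dpart_id[OF assms(4)]
  show ?thesis by auto
qed

lemma jac_holo:
  assumes "h holomorphic_on U" "open U" "disk \<subseteq> U" "x \<in> disk"
  shows "jac_det h x = (cmod (deriv h x))^2"
proof -
  have "jac_det h x = Im (cnj (deriv h x) * (deriv h x * \<i>))"
    unfolding jac_det_def using dpart_holo1[OF assms] by simp
  also have "\<dots> = Re (cnj (deriv h x) * deriv h x)" by (simp add: algebra_simps)
  also have "\<dots> = (cmod (deriv h x))^2"
    using complex_norm_square[of "deriv h x"] by (metis Re_complex_of_real mult.commute)
  finally show ?thesis .
qed

lemma good_holo:
  assumes h: "h holomorphic_on U" "open U" "disk \<subseteq> U"
    and k: "k holomorphic_on V" "open V" "disk \<subseteq> V"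
    and m: "\<forall>x\<in>disk. h x \<in> disk \<and> k x \<in> disk \<and> k (h x) = x \<and> h (k x) = x"
  shows "good h k"
proof -
  have sh: "smooth_disk h" using smooth_holo[OF h] .
  have sk: "smooth_disk k" using smooth_holo[OF k] .
  have prod: "jac_det f (g x) * jac_det g x = 1"
    if fg: "smooth_disk f" "smooth_disk g" "\<forall>x\<in>disk. g x \<in> disk \<and> f (g x) = x" and x: "x \<in> disk" for f g x
  proof -
    have "jac_det (\<lambda>y. f (g y)) x = jac_det f (g x) * jac_det g x"
      using jac_comp[OF x _ smooth_diff[OF fg(1)] smooth_diff[OF fg(2) x]] fg(3) x by auto
    moreover have "jac_det (\<lambda>y. f (g y)) x = 1" using jac_id_cong[OF x] fg(3) by simp
    ultimately show ?thesis by simp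
  qed
  have jh: "jac_det h x \<ge> 0" if "x \<in> disk" for x using jac_holo[OF h that] by simp
  have jk: "jac_det k x \<ge> 0" if "x \<in> disk" for x using jac_holo[OF k that] by simp
  have ph: "jac_det h x > 0" if x: "x \<in> disk" for x
  proof -
    have "jac_det h (k (h x)) * jac_det k (h x) = 1" by (rule prod[OF sh sk]) (use m x in auto)
    then have "jac_det h x * jac_det k (h x) = 1" using m x by simp
    then show ?thesis using jh[OF x] by (metis less_eq_real_def mult_zero_left zero_neq_one)
  qed
  have pk: "jac_det k x > 0" if x: "x \<in> disk" for x
  proof -
    have "jac_det k (h (k x)) * jac_det h (k x) = 1" by (rule prod[OF sk sh]) (use m x in auto)
    then have "jac_det k x * jac_det h (k x) = 1" using m x by simp
    then show ?thesis using jk[OF x] by (metis less_eq_real_def mult_zero_left zero_neq_one)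
  qed
  show ?thesis unfolding good_def using m sh sk ph pk by auto
qed

lemma good_half_rot: "good half_rot half_rot"
proof -
  have e: "half_rot = (\<lambda>z. - z)" by (auto simp: half_rot_def)
  show ?thesis unfolding e
    by (rule good_holo[of _ UNIV _ UNIV]) (auto simp: disk_def intro!: holomorphic_intros)
qed

lemma good_rot: "cmod w = 1 \<Longrightarrow> good (\<lambda>z. w * z) (\<lambda>z. cnj w * z)"
proof -
  assume w: "cmod w = 1"
  have ww': "w * cnj w = 1" using complex_norm_square[of w] w by simp
  then have ww: "cnj w * w = 1" by (simp add: mult.commute)
  show ?thesis
    by (rule good_holo[of _ UNIV _ UNIV]) (auto simp: disk_def norm_mult w ww ww' mult.assoc[symmetric] intro!: holomorphic_intros)
qed

definition mob :: "complex \<Rightarrow> complex \<Rightarrow> complex" where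
  "mob c z = (z - c) / (1 - cnj c * z)"

lemma mob_den: "cmod c < 1 \<Longrightarrow> cmod z \<le> 1 \<Longrightarrow> 1 - cnj c * z \<noteq> 0"
proof
  assume "cmod c < 1" "cmod z \<le> 1" "1 - cnj c * z = 0"
  then have "cnj c * z = 1" by simp
  then have "cmod c * cmod z = 1" by (metis complex_mod_cnj norm_mult norm_one)
  moreover have "cmod c * cmod z < 1"
    using \<open>cmod c < 1\<close> \<open>cmod z \<le> 1\<close> by (metis mult_le_one norm_ge_zero less_le_not_le linorder_not_less mult_less_cancel_left1 less_le_trans mult_left_le norm_not_less_zero)
  ultimately show False by simp
qed

lemma mob_ident:
  "(cmod (1 - cnj c * z))^2 - (cmod (z - c))^2 = (1 - (cmod z)^2) * (1 - (cmod c)^2)"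
proof -
  have "complex_of_real ((cmod (1 - cnj c * z))^2 - (cmod (z - c))^2)
      = complex_of_real ((1 - (cmod z)^2) * (1 - (cmod c)^2))"
    by (simp only: of_real_diff of_real_mult of_real_1 complex_norm_square) (simp add: algebra_simps)
  then show ?thesis using of_real_eq_iff by blast
qed



lemma mob_sq:
  assumes c: "cmod c < 1" and z: "cmod z \<le> 1"
  shows "(cmod (mob c z))^2 = 1 - (1 - (cmod z)^2) * (1 - (cmod c)^2) / (cmod (1 - cnj c * z))^2"
proof -
  have d: "cmod (1 - cnj c * z) > 0" using mob_den[OF c z] by simp
  have "(cmod (mob c z))^2 = (cmod (z - c))^2 / (cmod (1 - cnj c * z))^2"
    by (simp add: mob_def norm_divide power_divide)
  also have "\<dots> = ((cmod (1 - cnj c * z))^2 - (1 - (cmod z)^2) * (1 - (cmod c)^2)) / (cmod (1 - cnj c * z))^2"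
    using mob_ident[of c z] by simp
  also have "\<dots> = 1 - (1 - (cmod z)^2) * (1 - (cmod c)^2) / (cmod (1 - cnj c * z))^2"
    using d by (simp add: field_simps)
  finally show ?thesis .
qed

lemma mob_le:
  assumes c: "cmod c < 1" and z: "cmod z \<le> 1"
  shows "cmod (mob c z) \<le> 1"
proof -
  have "(1 - (cmod z)^2) * (1 - (cmod c)^2) / (cmod (1 - cnj c * z))^2 \<ge> 0"
    using c z by (intro divide_nonneg_nonneg mult_nonneg_nonneg) (auto simp: power_le_one abs_square_le_1)
  then have "(cmod (mob c z))^2 \<le> 1" using mob_sq[OF c z] by simp
  then show ?thesis by (simp add: power_le_one_iff abs_square_le_1)
qed

lemma mob_circle:
  assumes c: "cmod c < 1" and z: "cmod z = 1"
  shows "cmod (mob c z) = 1"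
proof -
  have "(cmod (mob c z))^2 = 1" using mob_sq[OF c] z by simp
  then show ?thesis by (smt (verit) norm_ge_zero power2_eq_1_iff)
qed

lemma mob_ball:
  assumes c: "cmod c < 1" and z: "cmod z < 1"
  shows "cmod (mob c z) < 1"
proof -
  have d: "cmod (1 - cnj c * z) > 0" using mob_den[OF c] z by simp
  have "(cmod z)^2 < 1" "(cmod c)^2 < 1" using c z by (simp_all add: power_less_one_iff abs_square_less_1)
  then have "(1 - (cmod z)^2) * (1 - (cmod c)^2) / (cmod (1 - cnj c * z))^2 > 0"
    using d by (intro divide_pos_pos mult_pos_pos) auto
  then have "(cmod (mob c z))^2 < 1" using mob_sq[OF c] z by simp
  then show ?thesis by (simp add: abs_square_less_1)
qed

lemma mob_inv:
  assumes c: "cmod c < 1" and z: "cmod z \<le> 1"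
  shows "mob (-c) (mob c z) = z"
proof -
  define d where "d = 1 - cnj c * z"
  have d0: "d \<noteq> 0" using mob_den[OF c z] d_def by simp
  have cc: "1 - cnj c * c \<noteq> 0" using mob_den[OF c, of c] c by simp
  have "mob (-c) (mob c z) = ((z - c) / d + c) / (1 + cnj c * ((z - c) / d))"
    by (simp add: mob_def d_def)
  also have "\<dots> = ((z - c + c * d) / d) / ((d + cnj c * (z - c)) / d)"
  proof -
    have e1: "(z - c) / d + c = (z - c + c * d) / d" using d0 by (simp add: field_simps)
    have e2: "1 + cnj c * ((z - c) / d) = (d + cnj c * (z - c)) / d" using d0 by (simp add: field_simps)
    show ?thesis by (simp only: e1 e2)
  qed
  also have "\<dots> = (z - c + c * d) / (d + cnj c * (z - c))"
    using d0 by (simp add: divide_divide_eq_right)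
  also have "z - c + c * d = z * (1 - cnj c * c)" by (simp add: d_def algebra_simps)
  also have "d + cnj c * (z - c) = 1 - cnj c * c" by (simp add: d_def algebra_simps)
  finally show ?thesis using cc by simp
qed

lemma mob_holo: "mob c holomorphic_on {z. 1 - cnj c * z \<noteq> 0}"
  unfolding mob_def[abs_def] by (intro holomorphic_intros) auto

lemma mob_open: "open {z. 1 - cnj c * z \<noteq> 0}"
  by (rule open_Collect_neq) (intro continuous_intros)+

lemma good_mob: "cmod c < 1 \<Longrightarrow> good (mob c) (mob (-c))"
proof -
  assume c: "cmod c < 1"
  have c': "cmod (-c) < 1" using c by simp
  have sub: "disk \<subseteq> {z. 1 - cnj c * z \<noteq> 0}" using mob_den[OF c] by (auto simp: disk_def)
  have sub': "disk \<subseteq> {z. 1 - cnj (-c) * z \<noteq> 0}" using mob_den[OF c'] by (auto simp: disk_def)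
  show ?thesis
  proof (rule good_holo[OF mob_holo mob_open sub mob_holo mob_open sub'])
    show "\<forall>x\<in>disk. mob c x \<in> disk \<and> mob (- c) x \<in> disk \<and> mob (- c) (mob c x) = x \<and> mob c (mob (- c) x) = x"
      using mob_le[OF c] mob_le[OF c'] mob_inv[OF c] mob_inv[OF c'] by (auto simp: disk_def)
  qed
qed

lemma mob_self: "mob c c = 0" by (simp add: mob_def)



definition twist :: "(complex \<Rightarrow> complex) \<Rightarrow> complex \<Rightarrow> complex" where
  "twist \<theta> z = z * exp (\<i> * \<theta> (z * cnj z))"

definition realpoly :: "(complex \<Rightarrow> complex) \<Rightarrow> bool" where
  "realpoly \<theta> \<longleftrightarrow> \<theta> holomorphic_on UNIV \<and> (\<forall>r::real. \<theta> (of_real r) \<in> \<real>)"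

lemma deriv_real:
  assumes "realpoly \<theta>"
  shows "deriv \<theta> (of_real r) \<in> \<real>"
proof -
  let ?x = "complex_of_real r"
  have h: "\<theta> holomorphic_on UNIV" and re: "\<forall>r::real. \<theta> (of_real r) \<in> \<real>" using assms realpoly_def by auto
  have "(\<theta> has_field_derivative deriv \<theta> ?x) (at ?x within \<real>)"
    using holomorphic_derivI[OF h] by simp
  then have lim: "((\<lambda>y. (\<theta> y - \<theta> ?x) / (y - ?x)) \<longlongrightarrow> deriv \<theta> ?x) (at ?x within \<real>)"
    using has_field_derivative_iff by blast
  have ev: "eventually (\<lambda>y. (\<theta> y - \<theta> ?x) / (y - ?x) \<in> \<real>) (at ?x within \<real>)"
    unfolding eventually_at_filter
    by (rule always_eventually) (metis Reals_cases Reals_diff Reals_divide Reals_of_real re)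
  have nb: "at ?x within \<real> \<noteq> bot"
  proof -
    have "?x islimpt \<real>"
    proof (rule islimptI)
      fix T assume "?x \<in> T" "open T"
      then obtain e where e: "e > 0" "ball ?x e \<subseteq> T" using open_contains_ball by blast
      have "complex_of_real (r + e/2) \<in> ball ?x e" using e by (simp add: dist_norm)
      moreover have "complex_of_real (r + e/2) \<noteq> ?x" using e by simp
      ultimately show "\<exists>y\<in>\<real>. y \<in> T \<and> y \<noteq> ?x" using e by (metis Reals_of_real subsetD)
    qed
    then show ?thesis using trivial_limit_within by blast
  qed
  show ?thesis using Lim_in_closed_set[OF closed_complex_Reals ev nb lim] .
qed

lemma qreal: "z * cnj z = complex_of_real ((cmod z)^2)"
  using complex_norm_square[of z] by simp

lemma exp_iR: "s \<in> \<real> \<Longrightarrow> cmod (exp (\<i> * s)) = 1"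
  by (metis Reals_cases norm_exp_i_times)

lemma realpoly_q: "realpoly \<theta> \<Longrightarrow> \<theta> (z * cnj z) \<in> \<real>"
  unfolding realpoly_def by (metis qreal)

lemma twist_norm: "realpoly \<theta> \<Longrightarrow> cmod (twist \<theta> z) = cmod z"
proof -
  assume r: "realpoly \<theta>"
  have "cmod (exp (\<i> * \<theta> (z * cnj z))) = 1" by (rule exp_iR[OF realpoly_q[OF r]])
  then show ?thesis unfolding twist_def by (simp add: norm_mult)
qed

lemma realpoly_neg: "realpoly \<theta> \<Longrightarrow> realpoly (\<lambda>w. - \<theta> w)"
  unfolding realpoly_def by (auto intro!: holomorphic_intros)

lemma twist_inv: "realpoly \<theta> \<Longrightarrow> twist (\<lambda>w. - \<theta> w) (twist \<theta> z) = z"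
proof -
  assume r: "realpoly \<theta>"
  have "twist \<theta> z * cnj (twist \<theta> z) = z * cnj z"
    using twist_norm[OF r, of z] qreal by metis
  then have "twist (\<lambda>w. - \<theta> w) (twist \<theta> z) = twist \<theta> z * exp (\<i> * - \<theta> (z * cnj z))"
    unfolding twist_def[of "\<lambda>w. - \<theta> w"] by simp
  also have "\<dots> = z * exp (\<i> * \<theta> (z * cnj z)) * exp (\<i> * - \<theta> (z * cnj z))"
    by (simp add: twist_def)
  also have "\<dots> = z" by (simp add: mult.assoc exp_add[symmetric])
  finally show ?thesis .
qed

lemma twist_fix: "\<theta> (z * cnj z) = 0 \<Longrightarrow> twist \<theta> z = z"
  by (simp add: twist_def)

lemma SM_twist: "\<theta> holomorphic_on UNIV \<Longrightarrow> SM n (\<lambda>t. twist \<theta>)"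
proof -
  assume h: "\<theta> holomorphic_on UNIV"
  have E: "(\<lambda>w. exp (\<i> * \<theta> w)) holomorphic_on UNIV" using h by (intro holomorphic_intros)
  have q: "SM n (\<lambda>t z. z * cnj z)" using SM_mult[OF SM_id SM_lin[OF bounded_linear_cnj SM_id]] .
  have "SM n (\<lambda>t z. z * exp (\<i> * \<theta> (z * cnj z)))"
    using SM_mult[OF SM_id SM_holo[OF E open_UNIV q]] by simp
  then show ?thesis unfolding twist_def[abs_def] .
qed

lemma hd_cnj: "(cnj has_derivative cnj) F"
  using bounded_linear.has_derivative[OF bounded_linear_cnj has_derivative_ident] by simp

lemma dpart_cnj: "x \<in> disk \<Longrightarrow> dpart v cnj x = cnj v"
  using dpart_eq[of x cnj cnj] hd_cnj by simp

lemma tw_alg: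
  assumes "cnj e * e = 1"
  shows "Im (cnj (x * (e * (\<i> * complex_of_real s) * (x * cnj 1 + 1 * cnj x)) + 1 * e) *
             (x * (e * (\<i> * complex_of_real s) * (x * cnj \<i> + \<i> * cnj x)) + \<i> * e)) = 1"
proof -
  define A where "A = x * (\<i> * complex_of_real s) * (x * cnj 1 + 1 * cnj x) + 1"
  define B where "B = x * (\<i> * complex_of_real s) * (x * cnj \<i> + \<i> * cnj x) + \<i>"
  have "cnj (x * (e * (\<i> * complex_of_real s) * (x * cnj 1 + 1 * cnj x)) + 1 * e) *
             (x * (e * (\<i> * complex_of_real s) * (x * cnj \<i> + \<i> * cnj x)) + \<i> * e)
        = (cnj e * e) * (cnj A * B)"
    unfolding A_def B_def by (simp add: algebra_simps)
  also have "\<dots> = cnj A * B" using assms by simp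
  finally have eq: "cnj (x * (e * (\<i> * complex_of_real s) * (x * cnj 1 + 1 * cnj x)) + 1 * e) *
             (x * (e * (\<i> * complex_of_real s) * (x * cnj \<i> + \<i> * cnj x)) + \<i> * e) = cnj A * B" .
  have "Im (cnj A * B) = 1" unfolding A_def B_def by (simp add: algebra_simps power2_eq_square)
  then show ?thesis using eq by simp
qed

lemma jac_twist:
  assumes r: "realpoly \<theta>" and x: "x \<in> disk"
  shows "jac_det (twist \<theta>) x = 1"
proof -
  have h: "\<theta> holomorphic_on UNIV" using r realpoly_def by auto
  define E where "E = (\<lambda>w. exp (\<i> * \<theta> w))"
  have Eh: "E holomorphic_on UNIV" unfolding E_def using h by (intro holomorphic_intros)
  have dE: "deriv E w = E w * (\<i> * deriv \<theta> w)" for w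
  proof -
    have "(\<theta> has_field_derivative deriv \<theta> w) (at w)" using holomorphic_derivI[OF h] by simp
    then have "(E has_field_derivative E w * (\<i> * deriv \<theta> w)) (at w)"
      unfolding E_def by (auto intro!: derivative_eq_intros)
    then show ?thesis by (rule DERIV_imp_deriv)
  qed
  have di: "(\<lambda>y. y) differentiable (at x within disk)" by (rule differentiableI[OF has_derivative_ident])
  have dc: "cnj differentiable (at x within disk)"
    using hd_cnj differentiableI by blast
  have dq_d: "(\<lambda>z. z * cnj z) differentiable (at x within disk)"
    using has_derivative_mult[OF has_derivative_ident hd_cnj] differentiableI by blast
  have dq: "dpart v (\<lambda>z. z * cnj z) x = x * cnj v + v * cnj x" for v
    using dpart_mult[OF di dc x] dpart_id[OF x] dpart_cnj[OF x] by simp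
  have dEq_d: "(\<lambda>z. E (z * cnj z)) differentiable (at x within disk)"
  proof -
    have "E differentiable (at (x * cnj x) within (\<lambda>z. z * cnj z) ` disk)"
      using holomorphic_derivI[OF Eh open_UNIV] has_field_derivative_imp_has_derivative differentiableI by blast
    from differentiable_chain_within[OF dq_d this] show ?thesis by (simp add: o_def)
  qed
  have dEq: "dpart v (\<lambda>z. E (z * cnj z)) x = deriv E (x * cnj x) * dpart v (\<lambda>z. z * cnj z) x" for v
    using dpart_holo[OF Eh open_UNIV dq_d x] by simp
  have tw: "twist \<theta> = (\<lambda>z. z * E (z * cnj z))" by (auto simp: twist_def E_def fun_eq_iff)
  have dtw: "dpart v (twist \<theta>) x = x * dpart v (\<lambda>z. E (z * cnj z)) x + v * E (x * cnj x)" for v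
    unfolding tw using dpart_mult[OF di dEq_d x] dpart_id[OF x] by simp
  define e where "e = E (x * cnj x)"
  obtain s where s: "deriv \<theta> (x * cnj x) = complex_of_real s"
    using deriv_real[OF r, of "(cmod x)^2"] qreal by (metis Reals_cases)
  have "\<theta> (x * cnj x) \<in> \<real>" using r qreal unfolding realpoly_def by metis
  then have "cmod e = 1" unfolding e_def E_def by (rule exp_iR)
  then have ee: "cnj e * e = 1" using complex_norm_square[of e] by (simp add: mult.commute)
  have "jac_det (twist \<theta>) x = Im (cnj (x * (e * (\<i> * complex_of_real s) * (x * cnj 1 + 1 * cnj x)) + 1 * e) *
             (x * (e * (\<i> * complex_of_real s) * (x * cnj \<i> + \<i> * cnj x)) + \<i> * e))"
    unfolding jac_det_def dtw dEq dE dq e_def s by (simp add: mult.assoc)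
  also have "\<dots> = 1" by (rule tw_alg[OF ee])
  finally show ?thesis .
qed

lemma good_twist: "realpoly \<theta> \<Longrightarrow> good (twist \<theta>) (twist (\<lambda>w. - \<theta> w))"
proof -
  assume r: "realpoly \<theta>"
  have r': "realpoly (\<lambda>w. - \<theta> w)" using realpoly_neg[OF r] .
  have s: "smooth_disk (twist \<theta>)" "smooth_disk (twist (\<lambda>w. - \<theta> w))"
    using SM_smooth[OF SM_twist] r r' unfolding realpoly_def by blast+
  have inv2: "twist \<theta> (twist (\<lambda>w. - \<theta> w) z) = z" for z
    using twist_inv[OF r'] by simp
  show ?thesis unfolding good_def
    using s twist_norm[OF r] twist_norm[OF r'] twist_inv[OF r] inv2 jac_twist[OF r] jac_twist[OF r']
    by (auto simp: disk_def)
qed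



lemma Re_cis_mult: "Re (cis (- a) * d) = cos a * Re d + sin a * Im d"
  by (simp add: cis.code)

lemma zero_unique:
  assumes d: "d \<noteq> 0" and a1: "0 < a1" "a1 < pi/2" and a2: "0 < a2" "a2 < pi/2"
    and z1: "Re (cis (- a1) * d) = 0" and z2: "Re (cis (- a2) * d) = 0"
  shows "a1 = a2"
proof -
  have e1: "cos a1 * Re d + sin a1 * Im d = 0" using z1 Re_cis_mult by simp
  have e2: "cos a2 * Re d + sin a2 * Im d = 0" using z2 Re_cis_mult by simp
  have "Re d * (cos a1 * sin a2 - sin a1 * cos a2) = 0"
  proof -
    have "Re d * (cos a1 * sin a2 - sin a1 * cos a2) = sin a2 * (cos a1 * Re d + sin a1 * Im d) - sin a1 * (cos a2 * Re d + sin a2 * Im d)"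
      by (simp add: algebra_simps)
    then show ?thesis using e1 e2 by simp
  qed
  moreover have "Im d * (cos a1 * sin a2 - sin a1 * cos a2) = 0"
  proof -
    have "Im d * (cos a1 * sin a2 - sin a1 * cos a2) = cos a1 * (cos a2 * Re d + sin a2 * Im d) - cos a2 * (cos a1 * Re d + sin a1 * Im d)"
      by (simp add: algebra_simps)
    then show ?thesis using e1 e2 by simp
  qed
  ultimately have "cos a1 * sin a2 - sin a1 * cos a2 = 0" using d by (metis complex_eq_iff mult_eq_0_iff zero_complex.sel)
  then have "sin (a2 - a1) = 0" by (simp add: sin_diff algebra_simps)
  then have "a2 - a1 = 0" by (rule sin_eq_0_pi[rotated 2]) (use a1 a2 in auto)
  then show ?thesis by simp
qed

lemma finite_subsing: "(\<And>x y. x \<in> S \<Longrightarrow> y \<in> S \<Longrightarrow> x = y) \<Longrightarrow> finite S"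
proof (cases "S = {}")
  case False
  assume A: "\<And>x y. x \<in> S \<Longrightarrow> y \<in> S \<Longrightarrow> x = y"
  then obtain y where "y \<in> S" using False by blast
  then have "S \<subseteq> {y}" using A by blast
  then show ?thesis using finite_subset by blast
qed simp

lemma choose_angle:
  assumes F: "finite F" and D: "\<forall>x\<in>F. d x \<noteq> 0" and a: "0 < a" "a \<le> pi/2"
  shows "\<exists>\<alpha>. 0 < \<alpha> \<and> \<alpha> < a \<and> (\<forall>x\<in>F. Re (cis (- \<alpha>) * d x) \<noteq> 0)"
proof -
  define B where "B = (\<Union>x\<in>F. {\<alpha>\<in>{0<..<a}. Re (cis (- \<alpha>) * d x) = 0})"
  have "finite B" unfolding B_def
  proof (rule finite_UN_I[OF F])
    fix x assume x: "x \<in> F"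
    show "finite {\<alpha>\<in>{0<..<a}. Re (cis (- \<alpha>) * d x) = 0}"
      by (rule finite_subsing) (use zero_unique[OF D[rule_format, OF x]] a in auto)
  qed
  moreover have "infinite {0<..<a}" using a by simp
  ultimately have "infinite ({0<..<a} - B)" using Diff_infinite_finite by blast
  then obtain \<alpha> where "\<alpha> \<in> {0<..<a} - B" by (metis finite.emptyI ex_in_conv)
  then show ?thesis unfolding B_def by auto
qed



lemma norm_sq_1m: "(cmod (1 - cnj c * z))^2 = 1 - 2 * Re (cnj c * z) + (cmod c)^2 * (cmod z)^2"
  unfolding cmod_power2 by (simp add: algebra_simps power2_eq_square)

lemma mob_eqr:
  assumes c: "cmod c < 1" and z: "cmod z \<le> 1"
  shows "(cmod (mob c z))^2 = (cmod c)^2 \<longleftrightarrow> (cmod z)^2 * (1 + (cmod c)^2) = 2 * Re (cnj c * z)"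
proof -
  define D where "D = (cmod (1 - cnj c * z))^2"
  have D: "D > 0" using mob_den[OF c z] by (simp add: D_def)
  have cc: "1 - (cmod c)^2 > 0" using c by (simp add: abs_square_less_1)
  have "(cmod (mob c z))^2 = (cmod c)^2 \<longleftrightarrow> 1 - (1 - (cmod z)^2) * (1 - (cmod c)^2) / D = (cmod c)^2"
    using mob_sq[OF c z] by (simp add: D_def)
  also have "\<dots> \<longleftrightarrow> (1 - (cmod z)^2) * (1 - (cmod c)^2) = (1 - (cmod c)^2) * D"
    using D by (auto simp: field_simps)
  also have "\<dots> \<longleftrightarrow> 1 - (cmod z)^2 = D" using cc by auto
  also have "\<dots> \<longleftrightarrow> (cmod z)^2 * (1 + (cmod c)^2) = 2 * Re (cnj c * z)"
    unfolding D_def norm_sq_1m by (auto simp: algebra_simps)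
  finally show ?thesis .
qed

lemma core_move:
  fixes \<tau> :: real
  assumes \<tau>: "0 < \<tau>" "\<tau> < 1" and F: "finite F" "F \<subseteq> ball 0 1" "0 \<notin> F" "complex_of_real \<tau> \<notin> F"
  shows "\<exists>G G'. good G G' \<and> (\<forall>x\<in>circle. G x = x) \<and> G 0 = complex_of_real \<tau> \<and> (\<forall>x\<in>F. G x = x)"
proof -
  define a where "a = arccos \<tau>"
  have a: "0 < a" "a < pi/2"
  proof -
    have "arccos 1 < arccos \<tau>" using \<tau> by (intro arccos_less_arccos) auto
    then show "0 < a" by (simp add: a_def)
    have "arccos \<tau> < arccos 0" using \<tau> by (intro arccos_less_arccos) auto
    then show "a < pi/2" by (simp add: a_def)
  qed
  define d where "d = (\<lambda>x. x - complex_of_real ((cmod x)^2 / \<tau>))"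
  have dnz: "\<forall>x\<in>F. d x \<noteq> 0"
  proof
    fix x assume x: "x \<in> F"
    show "d x \<noteq> 0"
    proof
      assume "d x = 0"
      then have xe: "x = complex_of_real ((cmod x)^2 / \<tau>)" by (simp add: d_def)
      then have "cmod x = (cmod x)^2 / \<tau>" by (metis norm_of_real abs_of_nonneg divide_nonneg_pos zero_le_power2 \<tau>(1))
      moreover have "cmod x > 0" using x F(3) by auto
      ultimately have "cmod x = \<tau>" using \<tau> by (simp add: power2_eq_square field_simps)
      then have "x = complex_of_real \<tau>" using xe \<tau> by (simp add: power2_eq_square)
      then show False using x F(4) by simp
    qed
  qed
  obtain \<alpha> where \<alpha>: "0 < \<alpha>" "\<alpha> < a" "\<forall>x\<in>F. Re (cis (- \<alpha>) * d x) \<noteq> 0"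
    using choose_angle[OF F(1) dnz a(1)] a(2) by auto
  define k where "k = cos \<alpha>"
  have k: "\<tau> < k"
  proof -
    have "cos a < cos \<alpha>" using \<alpha> a by (subst cos_mono_less_eq) auto
    then show ?thesis using \<tau> by (simp add: a_def k_def)
  qed
  define D where "D = sqrt (k^2 - \<tau>^2)"
  have D0: "0 \<le> D" using k \<tau> by (simp add: D_def)
  have D2: "D^2 = k^2 - \<tau>^2" using k \<tau> by (simp add: D_def power_strict_mono less_imp_le)
  have Dk: "k - \<tau> < D"
  proof -
    have h: "\<tau> * \<tau> < \<tau> * k" using k \<tau> by simp
    have D2': "D * D = k * k - \<tau> * \<tau>" using D2 by (simp add: power2_eq_square)
    have ex: "(k - \<tau>) * (k - \<tau>) = k * k - 2 * (\<tau> * k) + \<tau> * \<tau>" by (simp add: algebra_simps)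
    have "(k - \<tau>) * (k - \<tau>) < D * D" using h D2' ex by linarith
    then have "(k - \<tau>)^2 < D^2" by (simp add: power2_eq_square)
    then show ?thesis using D0 by (rule power2_less_imp_less)
  qed
  have Dk2: "D < k"
  proof -
    have "D^2 < k^2" using D2 \<tau> by simp
    then show ?thesis using k \<tau> by (meson less_le_trans power2_less_imp_less less_imp_le)
  qed
  define r where "r = (k - D) / \<tau>"
  have r0: "0 < r" using Dk2 \<tau> by (simp add: r_def)
  have r1: "r < 1" using Dk \<tau> by (simp add: r_def)
  have rq: "\<tau> * (1 + r^2) = 2 * r * k"
  proof -
    have "\<tau> * (1 + r^2) * \<tau> = \<tau>^2 + (k - D)^2" using \<tau> by (simp add: r_def power2_eq_square field_simps)
    also have "\<dots> = 2 * k * (k - D)" using D2 by (simp add: power2_eq_square algebra_simps)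
    also have "\<dots> = 2 * r * k * \<tau>" using \<tau> by (simp add: r_def)
    finally show ?thesis using \<tau> by simp
  qed
  define c where "c = complex_of_real r * cis \<alpha>"
  have cn: "cmod c = r" using r0 by (simp add: c_def norm_mult)
  have c1: "cmod c < 1" "cmod (-c) < 1" using cn r1 by auto
  have c0: "c \<noteq> 0" using cn r0 by auto
  have Rec: "Re (cnj c * z) = r * Re (cis (- \<alpha>) * z)" for z
    by (simp add: c_def cis_cnj algebra_simps)
  define M where "M = mob c"
  have Mr: "(cmod (M z))^2 = r^2 \<longleftrightarrow> (cmod z)^2 * (1 + r^2) = 2 * r * Re (cis (- \<alpha>) * z)"
    if "cmod z \<le> 1" for z
  proof -
    have "((cmod (M z))^2 = r^2) = ((cmod z)^2 * (1 + r^2) = 2 * Re (cnj c * z))"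
      using mob_eqr[OF c1(1) that] cn by (simp only: M_def)
    then show ?thesis by (simp only: Rec mult.assoc)
  qed
  have Mt: "(cmod (M (complex_of_real \<tau>)))^2 = r^2"
  proof -
    have "Re (cis (- \<alpha>) * complex_of_real \<tau>) = \<tau> * k" by (simp add: cis.code k_def)
    moreover have "\<tau>^2 * (1 + r^2) = 2 * r * (\<tau> * k)" using arg_cong[OF rq, of "\<lambda>x. \<tau> * x"] by (simp add: power2_eq_square algebra_simps)
    ultimately show ?thesis using Mr[of "complex_of_real \<tau>"] \<tau> by simp
  qed
  have MF: "(cmod (M x))^2 \<noteq> r^2" if x: "x \<in> F" for x
  proof
    assume eq: "(cmod (M x))^2 = r^2"
    have xb: "cmod x \<le> 1" using x F(2) by auto
    then have e: "(cmod x)^2 * (1 + r^2) = 2 * r * Re (cis (- \<alpha>) * x)" using Mr eq by blast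
    have "1 + r^2 = 2 * r * k / \<tau>" using rq \<tau> by (simp add: field_simps)
    then have e2: "(cmod x)^2 * (2 * r * k / \<tau>) = 2 * r * Re (cis (- \<alpha>) * x)" using e by simp
    have gen: "X = k * Y / \<tau>" if "Y * (2 * r * k / \<tau>) = 2 * r * X" for X Y
    proof -
      have "(2 * r) * X = (2 * r) * (k * Y / \<tau>)" using that by (simp add: algebra_simps)
      moreover have "2 * r \<noteq> 0" using r0 by simp
      ultimately show ?thesis by (metis mult_left_cancel)
    qed
    have "Re (cis (- \<alpha>) * x) = k * (cmod x)^2 / \<tau>" by (rule gen[OF e2])
    moreover have "Re (cis (- \<alpha>) * d x) = Re (cis (- \<alpha>) * x) - k * (cmod x)^2 / \<tau>"
      by (simp add: d_def algebra_simps cis.code k_def)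
    ultimately show False using \<alpha>(3) x by simp
  qed
  have M0: "M 0 = - c" by (simp add: M_def mob_def)
  define R where "R = (\<lambda>x. (cmod (M x))^2) ` F \<union> {1}"
  have Rf: "finite R" using F(1) by (simp add: R_def)
  have r21: "r^2 \<noteq> 1" using r0 r1 by (simp add: power2_eq_1_iff)
  have Rr: "r^2 \<notin> R"
  proof
    assume "r^2 \<in> R"
    then consider "r^2 = 1" | x where "x \<in> F" "r^2 = (cmod (M x))^2" unfolding R_def by blast
    then show False using MF r21 by metis
  qed
  define u where "u = M (complex_of_real \<tau>) / (- c)"
  have Mtn: "cmod (M (complex_of_real \<tau>)) = r" using Mt r0
    by (metis norm_ge_zero power2_eq_iff_nonneg less_imp_le)
  have un: "cmod u = 1" using Mtn cn c0 r0 by (simp add: u_def norm_divide)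
  define \<alpha>0 where "\<alpha>0 = Arg u"
  have cu: "cis \<alpha>0 = u"
  proof -
    have "u \<noteq> 0" using un by auto
    then have "cis \<alpha>0 = sgn u" by (simp add: \<alpha>0_def cis_Arg)
    then show ?thesis using un by (simp add: sgn_div_norm)
  qed
  define \<theta> where "\<theta> = (\<lambda>w. complex_of_real \<alpha>0 * (\<Prod>y\<in>R. (w - of_real y) / (of_real (r^2) - of_real y)))"
  have nz: "\<forall>y\<in>R. complex_of_real (r^2) - of_real y \<noteq> 0" 
  proof
    fix y assume y: "y \<in> R"
    then have "y \<noteq> r^2" using Rr by auto
    then have "complex_of_real (r^2) \<noteq> complex_of_real y" by (simp only: of_real_eq_iff)
    then show "complex_of_real (r^2) - of_real y \<noteq> 0" by (metis right_minus_eq)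
  qed
  have rp: "realpoly \<theta>"
    unfolding realpoly_def
  proof
    show "\<theta> holomorphic_on UNIV" unfolding \<theta>_def by (intro holomorphic_intros) (use nz in blast)
    show "\<forall>t::real. \<theta> (of_real t) \<in> \<real>"
    proof
      fix t :: real
      have "\<theta> (of_real t) = complex_of_real (\<alpha>0 * (\<Prod>y\<in>R. (t - y) / (r^2 - y)))"
        by (simp add: \<theta>_def of_real_prod)
      then show "\<theta> (of_real t) \<in> \<real>" by simp
    qed
  qed
  have \<theta>r: "\<theta> (of_real (r^2)) = of_real \<alpha>0"
  proof -
    have "(\<Prod>y\<in>R. (complex_of_real (r^2) - of_real y) / (of_real (r^2) - of_real y)) = 1"
      by (rule prod.neutral) (use nz in simp)
    then show ?thesis by (simp add: \<theta>_def)
  qed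
  have \<theta>0: "\<theta> (of_real y) = 0" if "y \<in> R" for y
    unfolding \<theta>_def using Rf that by (auto intro!: prod_zero)
  define Tw where "Tw = twist \<theta>"
  have Twfix: "Tw z = z" if "(cmod z)^2 \<in> R" for z
    unfolding Tw_def by (rule twist_fix) (simp only: qreal \<theta>0[OF that])
  have Tw0: "Tw (- c) = M (complex_of_real \<tau>)"
  proof -
    have "(- c) * cnj (- c) = of_real (r^2)" using qreal[of "-c"] cn by simp
    then have "Tw (- c) = - c * exp (\<i> * of_real \<alpha>0)" by (simp add: Tw_def twist_def \<theta>r del: of_real_power)
    also have "\<dots> = - c * u" by (simp add: cis_conv_exp[symmetric] cu)
    also have "\<dots> = M (complex_of_real \<tau>)" using c0 by (simp add: u_def)
    finally show ?thesis .
  qed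
  define G where "G = (\<lambda>x. mob (-c) (Tw (M x)))"
  have g1: "good (mob c) (mob (-c))" using good_mob[OF c1(1)] .
  have g2: "good Tw (twist (\<lambda>w. - \<theta> w))" unfolding Tw_def using good_twist[OF rp] .
  have g3: "good (mob (-c)) (mob (-(-c)))" using good_mob[OF c1(2)] .
  have gG: "good G (\<lambda>x. mob (-c) (twist (\<lambda>w. - \<theta> w) (mob (-(-c)) x)))"
    using good_comp[OF g3 good_comp[OF g2 g1]] unfolding G_def M_def .
  have G0: "G 0 = complex_of_real \<tau>"
    unfolding G_def M0 Tw0 unfolding M_def using mob_inv[OF c1(1), of "complex_of_real \<tau>"] \<tau> by simp
  have GF: "\<forall>x\<in>F. G x = x"
  proof
    fix x assume x: "x \<in> F"
    then have "(cmod (M x))^2 \<in> R" by (simp add: R_def)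
    then have "Tw (M x) = M x" by (rule Twfix)
    moreover have "cmod x \<le> 1" using x F(2) by auto
    ultimately show "G x = x" using mob_inv[OF c1(1)] by (simp add: G_def M_def)
  qed
  have GC: "\<forall>x\<in>circle. G x = x"
  proof
    fix x assume x: "x \<in> circle"
    then have "cmod x = 1" by (simp add: circle_def)
    then have "cmod (M x) = 1" using mob_circle[OF c1(1)] by (simp add: M_def)
    then have "(cmod (M x))^2 \<in> R" by (simp add: R_def)
    then have "Tw (M x) = M x" by (rule Twfix)
    then show "G x = x" using mob_inv[OF c1(1)] \<open>cmod x = 1\<close> by (simp add: G_def M_def)
  qed
  show ?thesis using gG GC G0 GF by blast
qed



lemma good_inj: "good f g \<Longrightarrow> x \<in> disk \<Longrightarrow> y \<in> disk \<Longrightarrow> f x = f y \<Longrightarrow> x = y"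
  unfolding good_def by metis

lemma mob_zero_iff:
  assumes b: "cmod b < 1" and z: "cmod z \<le> 1" and "mob b z = 0"
  shows "z = b"
proof -
  have "z = mob (-b) (mob b z)" using mob_inv[OF b z] by simp
  also have "\<dots> = mob (-b) 0" using assms(3) by simp
  also have "\<dots> = b" by (simp add: mob_def)
  finally show ?thesis .
qed

lemma move:
  assumes b: "cmod b < 1" and t: "cmod t < 1" "b \<noteq> t"
    and F: "finite F" "F \<subseteq> ball 0 1" "b \<notin> F" "t \<notin> F"
  shows "\<exists>G G'. good G G' \<and> (\<forall>x\<in>circle. G x = x) \<and> G b = t \<and> (\<forall>x\<in>F. G x = x)"
proof -
  define m where "m = mob b t"
  have m0: "m \<noteq> 0" using mob_zero_iff[OF b less_imp_le[OF t(1)]] t(2) by (auto simp: m_def)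
  define w where "w = cnj m / complex_of_real (cmod m)"
  have w1: "cmod w = 1" using m0 by (simp add: w_def norm_divide)
  define A where "A = (\<lambda>z. w * mob b z)"
  define A' where "A' = (\<lambda>z. mob (-b) (cnj w * z))"
  have gA: "good A A'" unfolding A_def A'_def using good_comp[OF good_rot[OF w1] good_mob[OF b]] .
  define \<tau> where "\<tau> = cmod m"
  have At: "A t = complex_of_real \<tau>"
  proof -
    have "A t = cnj m * m / complex_of_real (cmod m)" by (simp add: A_def w_def m_def)
    also have "cnj m * m = complex_of_real ((cmod m)^2)" using complex_norm_square[of m] by (simp add: mult.commute)
    finally show ?thesis using m0 by (simp add: \<tau>_def power2_eq_square)
  qed
  have \<tau>: "0 < \<tau>" "\<tau> < 1" using m0 mob_ball[OF b t(1)] by (auto simp: \<tau>_def m_def)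
  have Ab: "A b = 0" by (simp add: A_def mob_self)
  have nA: "cmod (A z) = cmod (mob b z)" for z using w1 by (simp add: A_def norm_mult)
  have disk_iff: "z \<in> disk \<longleftrightarrow> cmod z \<le> 1" for z by (simp add: disk_def)
  define F' where "F' = A ` F"
  have F'1: "finite F'" using F(1) by (simp add: F'_def)
  have F'2: "F' \<subseteq> ball 0 1" using F(2) mob_ball[OF b] nA by (auto simp: F'_def)
  have Fd: "x \<in> disk" if "x \<in> F" for x using F(2) that by (auto simp: disk_def)
  have bd: "b \<in> disk" "t \<in> disk" using b t by (auto simp: disk_def)
  have F'3: "0 \<notin> F'"
  proof
    assume "0 \<in> F'"
    then obtain x where x: "x \<in> F" "A x = 0" by (auto simp: F'_def)
    then have "x = b" using good_inj[OF gA Fd[OF x(1)] bd(1)] Ab by simp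
    then show False using x F(3) by simp
  qed
  have F'4: "complex_of_real \<tau> \<notin> F'"
  proof
    assume "complex_of_real \<tau> \<in> F'"
    then obtain x where x: "x \<in> F" "A x = A t" using At by (auto simp: F'_def)
    then have "x = t" using good_inj[OF gA Fd[OF x(1)] bd(2)] by simp
    then show False using x F(4) by simp
  qed
  obtain G0 G0' where G0: "good G0 G0'" "\<forall>x\<in>circle. G0 x = x" "G0 0 = complex_of_real \<tau>" "\<forall>x\<in>F'. G0 x = x"
    using core_move[OF \<tau> F'1 F'2 F'3 F'4] by blast
  define G where "G = (\<lambda>z. A' (G0 (A z)))"
  have gG: "good G (\<lambda>x. A' (G0' (A x)))"
    unfolding G_def using good_comp[OF good_sym[OF gA] good_comp[OF G0(1) gA]] .
  have inv: "A' (A x) = x" if "x \<in> disk" for x using gA that unfolding good_def by blast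
  have GC: "\<forall>x\<in>circle. G x = x"
  proof
    fix x assume x: "x \<in> circle"
    then have "cmod x = 1" by (simp add: circle_def)
    then have "A x \<in> circle" using nA mob_circle[OF b] by (simp add: circle_def)
    then show "G x = x" using G0(2) inv x circle_disk by (auto simp: G_def)
  qed
  have Gb: "G b = t" unfolding G_def Ab G0(3) At[symmetric] using inv bd by simp
  have GF: "\<forall>x\<in>F. G x = x"
    using G0(4) inv Fd by (auto simp: G_def F'_def)
  show ?thesis using gG GC Gb GF by blast
qed

lemma move_list:
  "\<forall>qs F. length qs = length ps \<longrightarrow> distinct ps \<longrightarrow> distinct qs \<longrightarrow> set ps \<inter> set qs = {} \<longrightarrow>
     set ps \<subseteq> ball 0 1 \<longrightarrow> set qs \<subseteq> ball 0 1 \<longrightarrow> finite F \<longrightarrow> F \<subseteq> ball 0 1 \<longrightarrow>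
     F \<inter> (set ps \<union> set qs) = {} \<longrightarrow>
     (\<exists>\<psi> \<psi>'. good \<psi> \<psi>' \<and> (\<forall>x\<in>circle. \<psi> x = x) \<and> map \<psi> ps = qs \<and> (\<forall>x\<in>F. \<psi> x = x))"
proof (induction ps)
  case Nil
  show ?case using good_id by auto
next
  case (Cons p ps)
  show ?case
  proof (intro allI impI)
    fix qs F
    assume len: "length qs = length (p # ps)" and dp: "distinct (p # ps)" and dq: "distinct qs"
      and dj: "set (p # ps) \<inter> set qs = {}" and pb: "set (p # ps) \<subseteq> ball 0 1" and qb: "set qs \<subseteq> ball 0 1"
      and Ff: "finite F" and Fb: "F \<subseteq> ball 0 1" and Fd: "F \<inter> (set (p # ps) \<union> set qs) = {}"
    obtain q qs' where qs: "qs = q # qs'" using len by (cases qs) auto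
    have "\<exists>G G'. good G G' \<and> (\<forall>x\<in>circle. G x = x) \<and> G p = q \<and> (\<forall>x\<in>F \<union> set ps. G x = x)"
    proof (rule move)
      show "cmod p < 1" "cmod q < 1" using pb qb qs by auto
      show "p \<noteq> q" using dj qs by auto
      show "finite (F \<union> set ps)" using Ff by simp
      show "F \<union> set ps \<subseteq> ball 0 1" using Fb pb by auto
      show "p \<notin> F \<union> set ps" using Fd dp by auto
      show "q \<notin> F \<union> set ps" using Fd dj qs by auto
    qed
    then obtain G G' where G: "good G G'" "\<forall>x\<in>circle. G x = x" "G p = q" "\<forall>x\<in>F \<union> set ps. G x = x"
      by blast
    have "\<exists>\<psi> \<psi>'. good \<psi> \<psi>' \<and> (\<forall>x\<in>circle. \<psi> x = x) \<and> map \<psi> ps = qs' \<and> (\<forall>x\<in>F \<union> {q}. \<psi> x = x)"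
      using Cons.IH[rule_format, of qs' "F \<union> {q}"] len dp dq dj pb qb Ff Fb Fd qs by auto
    then obtain \<psi> \<psi>' where \<psi>: "good \<psi> \<psi>'" "\<forall>x\<in>circle. \<psi> x = x" "map \<psi> ps = qs'" "\<forall>x\<in>F \<union> {q}. \<psi> x = x"
      by blast
    have g: "good (\<lambda>x. \<psi> (G x)) (\<lambda>x. G' (\<psi>' x))" using good_comp[OF \<psi>(1) G(1)] .
    have "map (\<lambda>x. \<psi> (G x)) ps = map \<psi> ps" using G(4) by simp
    then have "map (\<lambda>x. \<psi> (G x)) (p # ps) = qs" using \<psi>(3,4) G(3) qs by simp
    moreover have "\<forall>x\<in>circle. \<psi> (G x) = x" using G(2) \<psi>(2) by simp
    moreover have "\<forall>x\<in>F. \<psi> (G x) = x" using G(4) \<psi>(4) by simp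
    ultimately show "\<exists>\<psi> \<psi>'. good \<psi> \<psi>' \<and> (\<forall>x\<in>circle. \<psi> x = x) \<and> map \<psi> (p # ps) = qs \<and> (\<forall>x\<in>F. \<psi> x = x)"
      using g by blast
  qed
qed



lemma exists_T:
  assumes P: "finite P" "card P = 2 * g" "P \<subseteq> ball 0 1"
  shows "\<exists>T. T \<in> half_set P \<and> (\<forall>x\<in>circle. T x = half_rot x) \<and> (\<forall>x\<in>disk. T (T x) = x)"
proof -
  have fn: "finite (norm ` P)" using P(1) by simp
  have i1: "infinite {0<..<1::real}" by simp
  have inf: "infinite ({0<..<1::real} - norm ` P)" by (rule Diff_infinite_finite[OF fn i1])
  obtain S where S0: "finite S" "card S = g" "S \<subseteq> {0<..<1::real} - norm ` P"
    using infinite_arbitrarily_large[OF inf, of g] by blast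
  have S: "S \<subseteq> {0<..<1::real} - norm ` P" "finite S" "card S = g" using S0 by auto
  define Q where "Q = complex_of_real ` S \<union> (\<lambda>s. - complex_of_real s) ` S"
  have dis: "complex_of_real ` S \<inter> (\<lambda>s. - complex_of_real s) ` S = {}"
  proof -
    have ne: "complex_of_real s \<noteq> - complex_of_real s'" if "s \<in> S" "s' \<in> S" for s s'
    proof -
      have "s > 0" "s' > 0" using S(1) that by auto
      then have "s \<noteq> - s'" by simp
      then show ?thesis by (metis of_real_eq_iff of_real_minus)
    qed
    show ?thesis using ne by blast
  qed
  have cQ: "card Q = 2 * g"
  proof -
    have "card Q = card (complex_of_real ` S) + card ((\<lambda>s. - complex_of_real s) ` S)"
      unfolding Q_def using dis S(2) by (intro card_Un_disjoint) auto
    also have "card (complex_of_real ` S) = g" using S(3) by (simp add: card_image inj_on_def)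
    also have "card ((\<lambda>s. - complex_of_real s) ` S) = g" using S(3) by (simp add: card_image inj_on_def)
    finally show ?thesis by simp
  qed
  have fQ: "finite Q" using S(2) by (simp add: Q_def)
  have Qb: "Q \<subseteq> ball 0 1" using S(1) by (auto simp: Q_def)
  have PQ: "P \<inter> Q = {}"
  proof (rule ccontr)
    assume "P \<inter> Q \<noteq> {}"
    then obtain s where s: "s \<in> S" "complex_of_real s \<in> P \<or> - complex_of_real s \<in> P" by (auto simp: Q_def)
    then have "s > 0" "s \<notin> norm ` P" using S(1) by auto
    then show False using s(2) by (metis abs_of_pos image_eqI norm_minus_cancel norm_of_real)
  qed
  have hQ: "half_rot ` Q = Q"
  proof
    show "half_rot ` Q \<subseteq> Q" by (auto simp: Q_def half_rot_def)
    show "Q \<subseteq> half_rot ` Q"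
    proof
      fix x assume "x \<in> Q"
      then have "half_rot x \<in> Q" "x = half_rot (half_rot x)" by (auto simp: Q_def half_rot_def)
      then show "x \<in> half_rot ` Q" by blast
    qed
  qed
  obtain ps where ps: "distinct ps" "set ps = P" using finite_distinct_list[OF P(1)] by blast
  obtain qs where qs: "distinct qs" "set qs = Q" using finite_distinct_list[OF fQ] by blast
  have len: "length qs = length ps" using distinct_card[OF ps(1)] distinct_card[OF qs(1)] ps(2) qs(2) P(2) cQ by simp
  obtain \<psi> \<psi>' where \<psi>: "good \<psi> \<psi>'" "\<forall>x\<in>circle. \<psi> x = x" "map \<psi> ps = qs"
    using move_list[of ps, rule_format, of qs "{}"] len ps qs PQ P(3) Qb by auto
  have \<psi>P: "\<psi> ` P = Q" using \<psi>(3) ps(2) qs(2) by (metis list.set_map)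
  have inv: "\<forall>x\<in>disk. \<psi>' (\<psi> x) = x" "\<forall>x\<in>disk. \<psi> (\<psi>' x) = x" "\<forall>x\<in>disk. \<psi> x \<in> disk" "\<forall>x\<in>disk. \<psi>' x \<in> disk"
    using \<psi>(1) unfolding good_def by auto
  have Pd: "P \<subseteq> disk" using P(3) by (auto simp: disk_def)
  define T where "T = (\<lambda>x. \<psi>' (half_rot (\<psi> x)))"
  have gT: "good T (\<lambda>x. \<psi>' (half_rot (\<psi> x)))"
    unfolding T_def using good_comp[OF good_sym[OF \<psi>(1)] good_comp[OF good_half_rot \<psi>(1)]] .
  have TD: "T \<in> Diff_plus" using good_Diff[OF gT] .
  have hd: "half_rot x \<in> disk" if "x \<in> disk" for x using that by (simp add: half_rot_def disk_def)
  have TP: "T ` P = P"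
  proof -
    have "T ` P = \<psi>' ` (half_rot ` (\<psi> ` P))" by (auto simp: T_def image_image)
    also have "\<dots> = \<psi>' ` (\<psi> ` P)" using \<psi>P hQ by simp
    also have "\<dots> = P" using inv(1) Pd by (force simp: image_image)
    finally show ?thesis .
  qed
  have \<psi>'C: "\<forall>x\<in>circle. \<psi>' x = x" using \<psi>(2) inv(1) circle_disk by (metis subsetD)
  have TC: "\<forall>x\<in>circle. T x = half_rot x"
    using \<psi>(2) \<psi>'C half_rot_circle by (simp add: T_def)
  have TT: "\<forall>x\<in>disk. T (T x) = x"
  proof
    fix x assume x: "x \<in> disk"
    have "\<psi> (T x) = half_rot (\<psi> x)" unfolding T_def using inv(2) hd inv(3) x by simp
    then have "T (T x) = \<psi>' (half_rot (half_rot (\<psi> x)))" by (simp add: T_def)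
    also have "\<dots> = x" using inv(1) x by (simp add: half_rot_def)
    finally show "T (T x) = x" .
  qed
  have "T \<in> half_set P" unfolding half_set_def using TD TP TC by simp
  then show ?thesis using TC TT by blast
qed

theorem lemma3p3:
  fixes g :: nat and P :: "complex set"
  assumes "g \<ge> 1" and "finite P" and "card P = 2 * g" and "P \<subseteq> ball 0 1"
  shows "\<exists>\<sigma>. \<sigma> \<in> hom (integer_mod_group 2) (MCG_half P) \<and>
             (\<forall>k \<in> carrier (integer_mod_group 2). bdry_class (\<sigma> k) = k)"
proof -
  obtain T where "T \<in> half_set P" "\<forall>x\<in>circle. T x = half_rot x" "\<forall>x\<in>disk. T (T x) = x"
    using exists_T[OF assms(2,3,4)] by blast
  then show ?thesis by (rule hom_from_T)
qed


end
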